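(* Let $\Gamma$ be an oriented Jordan smooth curve, $\alpha$ a diffeomorphism of $\Gamma$ onto itself with a nonempty set of periodic points, $X(\Gamma)$ a rearrangement-invariant space with Boyd indices $\alpha_X,\beta_X$, and $a,b\in C(\Gamma)$. Then for every $i\in\{0,1\}$ and every $k\in\mathbb Z$, $\eta_i^-(t)=\eta_i^-[\alpha_k(t)]$ and $\eta_i^+(t)=\eta_i^+[\alpha_k(t)]$ for all $t\in\Gamma$; hence the sets $\Gamma_j$, $j\in\{1,\dots,5\}$, are $\alpha_k$-invariant.
   Context: $\alpha_n$ are iterates of $\alpha$ ($n\in\mathbb Z$). $m$ is the common multiplicity of periodic points if $\alpha$ preserves orientation, $m=2$ if it changes orientation; $\Phi=\overline{\{t:\alpha_m(t)\ne t\}}$; $f_m(t)=\prod_{i=0}^{m-1}f[\alpha_i(t)]$. $\eta_0(t)=|a_m(t)|-|b_m(t)|\min\{|\alpha_m'(t)|^{-\alpha_X},|\alpha_m'(t)|^{-\beta_X}\}$, $\eta_1(t)=|a_m(t)|-|b_m(t)|\max\{|\alpha_m'(t)|^{-\alpha_X},|\alpha_m'(t)|^{-\beta_X}\}$, $\eta_i^\pm(t)=\lim_{n\to\pm\infty}\eta_i[\alpha_{mn}(t)]$. $\Gamma_1=\Gamma\setminus\Phi$, $\Gamma_2=\{t\in\Phi:\eta_1^-(t)>0,\eta_1^+(t)>0\}$, $\Gamma_3=\{t\in\Phi:\eta_0^-(t)<0,\eta_0^+(t)<0\}$, $\Gamma_4=\{t\in\Phi:\eta_0^+(t)<0<\eta_1^-(t)\}$,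 $\Gamma_5=\{t\in\Phi:\eta_0^-(t)<0<\eta_1^+(t)\}$. *)

theory Defs
  imports "HOL-Analysis.Analysis"
begin

text \<open>The
orientation is the one induced by the parametrisation.\<close>

definition smooth_jordan_curve :: "(real \<Rightarrow> complex) \<Rightarrow> bool" where
  "smooth_jordan_curve \<gamma> \<longleftrightarrow> simple_path \<gamma> \<and>
     (\<exists>\<gamma>'. continuous_on {0..1} \<gamma>' \<and>
        (\<forall>s\<in>{0..1}. (\<gamma> has_vector_derivative \<gamma>' s) (at s within {0..1}) \<and> \<gamma>' s \<noteq> 0) \<and>
        (pathfinish \<gamma> = pathstart \<gamma> \<longrightarrow> (\<exists>c>0. \<gamma>' 1 = complex_of_real c * \<gamma>' 0)))"

definition curve_deriv :: "complex set \<Rightarrow> (complex \<Rightarrow> complex) \<Rightarrow> complex \<Rightarrow> complex" where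
  "curve_deriv \<Gamma> f t = (THE D. (f has_field_derivative D) (at t within \<Gamma>))"

definition curve_diff1 :: "complex set \<Rightarrow> (complex \<Rightarrow> complex) \<Rightarrow> bool" where
  "curve_diff1 \<Gamma> f \<longleftrightarrow>
     (\<forall>t\<in>\<Gamma>. (f has_field_derivative curve_deriv \<Gamma> f t) (at t within \<Gamma>) \<and> curve_deriv \<Gamma> f t \<noteq> 0)
     \<and> continuous_on \<Gamma> (curve_deriv \<Gamma> f)"

definition curve_diffeo :: "complex set \<Rightarrow> (complex \<Rightarrow> complex) \<Rightarrow> bool" where
  "curve_diffeo \<Gamma> \<alpha> \<longleftrightarrow> bij_betw \<alpha> \<Gamma> \<Gamma> \<and> curve_diff1 \<Gamma> \<alpha> \<and> curve_diff1 \<Gamma> (inv_into \<Gamma> \<alpha>)"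

definition iter :: "complex set \<Rightarrow> (complex \<Rightarrow> complex) \<Rightarrow> int \<Rightarrow> complex \<Rightarrow> complex" where
  "iter \<Gamma> \<alpha> n = (if n \<ge> 0 then \<alpha> ^^ nat n else inv_into \<Gamma> \<alpha> ^^ nat (- n))"

definition periodic_point :: "complex set \<Rightarrow> (complex \<Rightarrow> complex) \<Rightarrow> complex \<Rightarrow> bool" where
  "periodic_point \<Gamma> \<alpha> t \<longleftrightarrow> t \<in> \<Gamma> \<and> (\<exists>n::nat. n > 0 \<and> (\<alpha> ^^ n) t = t)"

definition param :: "(real \<Rightarrow> complex) \<Rightarrow> complex \<Rightarrow> real" where
  "param \<gamma> x = inv_into (if pathfinish \<gamma> = pathstart \<gamma> then {0..<1} else {0..1}) \<gamma> x"

definition cyc_pos :: "real \<Rightarrow> real \<Rightarrow> real \<Rightarrow> bool" where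
  "cyc_pos x y z \<longleftrightarrow> (x < y \<and> y < z) \<or> (y < z \<and> z < x) \<or> (z < x \<and> x < y)"

definition orient_pres :: "(real \<Rightarrow> complex) \<Rightarrow> (complex \<Rightarrow> complex) \<Rightarrow> bool" where
  "orient_pres \<gamma> \<alpha> \<longleftrightarrow> (\<forall>x\<in>path_image \<gamma>. \<forall>y\<in>path_image \<gamma>. \<forall>z\<in>path_image \<gamma>.
      cyc_pos (param \<gamma> x) (param \<gamma> y) (param \<gamma> z) \<longrightarrow>
      cyc_pos (param \<gamma> (\<alpha> x)) (param \<gamma> (\<alpha> y)) (param \<gamma> (\<alpha> z)))"

definition mult :: "(real \<Rightarrow> complex) \<Rightarrow> (complex \<Rightarrow> complex) \<Rightarrow> nat" where
  "mult \<gamma> \<alpha> = (if orient_pres \<gamma> \<alpha>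
      then (LEAST n::nat. n > 0 \<and> (\<exists>t\<in>path_image \<gamma>. (\<alpha> ^^ n) t = t)) else 2)"

definition fm :: "(real \<Rightarrow> complex) \<Rightarrow> (complex \<Rightarrow> complex) \<Rightarrow> (complex \<Rightarrow> complex) \<Rightarrow> complex \<Rightarrow> complex" where
  "fm \<gamma> \<alpha> f t = (\<Prod>i<mult \<gamma> \<alpha>. f (iter (path_image \<gamma>) \<alpha> (int i) t))"

definition Phi :: "(real \<Rightarrow> complex) \<Rightarrow> (complex \<Rightarrow> complex) \<Rightarrow> complex set" where
  "Phi \<gamma> \<alpha> = closure {t \<in> path_image \<gamma>. iter (path_image \<gamma>) \<alpha> (int (mult \<gamma> \<alpha>)) t \<noteq> t}"

text \<open>\<open>eta \<gamma> \<alpha> a b aX bX 0\<close> is \<open>\<eta>_0\<close>, \<open>eta \<dots> 1\<close> is \<open>\<eta>_1\<close>; \<open>aX, bX\<close> are the Boyd indices.\<close>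

definition eta :: "(real \<Rightarrow> complex) \<Rightarrow> (complex \<Rightarrow> complex) \<Rightarrow> (complex \<Rightarrow> complex) \<Rightarrow> (complex \<Rightarrow> complex)
    \<Rightarrow> real \<Rightarrow> real \<Rightarrow> nat \<Rightarrow> complex \<Rightarrow> real" where
  "eta \<gamma> \<alpha> a b aX bX i t =
     (let D = norm (curve_deriv (path_image \<gamma>) (iter (path_image \<gamma>) \<alpha> (int (mult \<gamma> \<alpha>))) t)
      in norm (fm \<gamma> \<alpha> a t) - norm (fm \<gamma> \<alpha> b t) *
           (if i = 0 then min (D powr (- aX)) (D powr (- bX)) else max (D powr (- aX)) (D powr (- bX))))"

definition eta_minus :: "(real \<Rightarrow> complex) \<Rightarrow> (complex \<Rightarrow> complex) \<Rightarrow> (complex \<Rightarrow> complex) \<Rightarrow> (complex \<Rightarrow> complex)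
    \<Rightarrow> real \<Rightarrow> real \<Rightarrow> nat \<Rightarrow> complex \<Rightarrow> real" where
  "eta_minus \<gamma> \<alpha> a b aX bX i t =
     Lim at_bot (\<lambda>n::int. eta \<gamma> \<alpha> a b aX bX i (iter (path_image \<gamma>) \<alpha> (int (mult \<gamma> \<alpha>) * n) t))"

definition eta_plus :: "(real \<Rightarrow> complex) \<Rightarrow> (complex \<Rightarrow> complex) \<Rightarrow> (complex \<Rightarrow> complex) \<Rightarrow> (complex \<Rightarrow> complex)
    \<Rightarrow> real \<Rightarrow> real \<Rightarrow> nat \<Rightarrow> complex \<Rightarrow> real" where
  "eta_plus \<gamma> \<alpha> a b aX bX i t =
     Lim at_top (\<lambda>n::int. eta \<gamma> \<alpha> a b aX bX i (iter (path_image \<gamma>) \<alpha> (int (mult \<gamma> \<alpha>) * n) t))"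

definition Gamma_set :: "(real \<Rightarrow> complex) \<Rightarrow> (complex \<Rightarrow> complex) \<Rightarrow> (complex \<Rightarrow> complex) \<Rightarrow> (complex \<Rightarrow> complex)
    \<Rightarrow> real \<Rightarrow> real \<Rightarrow> nat \<Rightarrow> complex set" where
  "Gamma_set \<gamma> \<alpha> a b aX bX j =
     (let \<Phi> = Phi \<gamma> \<alpha>;
          em = eta_minus \<gamma> \<alpha> a b aX bX; ep = eta_plus \<gamma> \<alpha> a b aX bX
      in if j = 1 then path_image \<gamma> - \<Phi>
         else if j = 2 then {t \<in> \<Phi>. em 1 t > 0 \<and> ep 1 t > 0}
         else if j = 3 then {t \<in> \<Phi>. em 0 t < 0 \<and> ep 0 t < 0}
         else if j = 4 then {t \<in> \<Phi>. ep 0 t < 0 \<and> 0 < em 1 t}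
         else if j = 5 then {t \<in> \<Phi>. em 0 t < 0 \<and> 0 < ep 1 t}
         else {})"

end

theory Submission
  imports Defs
begin


lemma funpow_cancel:
  assumes "\<And>x. x \<in> S \<Longrightarrow> g x \<in> S" "\<And>x. x \<in> S \<Longrightarrow> f (g x) = x" "x \<in> S"
  shows "(f ^^ a) ((g ^^ b) x) = (if b \<le> a then (f ^^ (a - b)) x else (g ^^ (b - a)) x)"
  using assms(3)
proof (induction b arbitrary: a x)
  case 0 then show ?case by simp
next
  case (Suc b)
  have gx: "g x \<in> S" using Suc.prems assms(1) by blast
  have e: "(g ^^ Suc b) x = (g ^^ b) (g x)" by (simp add: funpow_swap1)
  show ?case
  proof (cases "Suc b \<le> a")
    case True
    then have ab: "a - b = Suc (a - Suc b)" by simp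
    have "(f ^^ (a - b)) (g x) = (f ^^ (a - Suc b)) (f (g x))"
      unfolding ab by (simp only: funpow_Suc_right comp_apply)
    then have "(f ^^ (a - b)) (g x) = (f ^^ (a - Suc b)) x"
      using assms(2)[OF Suc.prems] by simp
    then show ?thesis using True Suc.IH[OF gx, of a] e by simp
  next
    case False
    have h1: "(f ^^ a) ((g ^^ b) (g x)) = (g ^^ (b - a)) (g x)"
      using Suc.IH[OF gx, of a] False by (cases "b = a") auto
    have h2: "(g ^^ (b - a)) (g x) = (g ^^ (Suc b - a)) x"
      using False by (simp add: Suc_diff_le funpow_swap1)
    show ?thesis using h1 h2 e False by simp
  qed
qed

lemma funpow_in:
  assumes "\<And>x. x \<in> S \<Longrightarrow> g x \<in> S" "x \<in> S"
  shows "(g ^^ n) x \<in> S"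
  using assms(2) by (induction n) (auto intro: assms(1))

locale bijG =
  fixes G :: "complex set" and \<alpha> :: "complex \<Rightarrow> complex"
  assumes bij: "bij_betw \<alpha> G G"
begin

abbreviation "\<iota> \<equiv> inv_into G \<alpha>"

lemma a_in: "x \<in> G \<Longrightarrow> \<alpha> x \<in> G"
  by (rule bij_betw_apply[OF bij])
lemma i_in: "x \<in> G \<Longrightarrow> \<iota> x \<in> G"
  by (rule bij_betw_apply[OF bij_betw_inv_into[OF bij]])
lemma ai: "x \<in> G \<Longrightarrow> \<alpha> (\<iota> x) = x"
  by (rule bij_betw_inv_into_right[OF bij])
lemma ia: "x \<in> G \<Longrightarrow> \<iota> (\<alpha> x) = x"
  by (rule bij_betw_inv_into_left[OF bij])
lemma a_inj: "x \<in> G \<Longrightarrow> y \<in> G \<Longrightarrow> \<alpha> x = \<alpha> y \<Longrightarrow> x = y"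
proof -
  assume h: "x \<in> G" "y \<in> G" "\<alpha> x = \<alpha> y"
  have "x = \<iota> (\<alpha> x)" using ia[OF h(1)] by (rule sym)
  also have "\<dots> = \<iota> (\<alpha> y)" using h(3) by (rule arg_cong)
  also have "\<dots> = y" by (rule ia[OF h(2)])
  finally show "x = y" .
qed
lemma i_inj: "x \<in> G \<Longrightarrow> y \<in> G \<Longrightarrow> \<iota> x = \<iota> y \<Longrightarrow> x = y"
proof -
  assume h: "x \<in> G" "y \<in> G" "\<iota> x = \<iota> y"
  have "x = \<alpha> (\<iota> x)" using ai[OF h(1)] by (rule sym)
  also have "\<dots> = \<alpha> (\<iota> y)" using h(3) by (rule arg_cong)
  also have "\<dots> = y" by (rule ai[OF h(2)])
  finally show "x = y" .
qed

lemma iter_in: "x \<in> G \<Longrightarrow> iter G \<alpha> k x \<in> G"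
  unfolding iter_def using funpow_in[of G \<alpha>, OF a_in] funpow_in[of G \<iota>, OF i_in] by auto

lemma iter_nat: "iter G \<alpha> (int n) = \<alpha> ^^ n"
  by (simp add: iter_def)

lemma iter_add:
  assumes "x \<in> G"
  shows "iter G \<alpha> a (iter G \<alpha> b x) = iter G \<alpha> (a + b) x"
proof -
  note c2 = funpow_cancel[of G \<iota> \<alpha>, OF i_in ai assms]
  note c1 = funpow_cancel[of G \<alpha> \<iota>, OF a_in ia assms]
  show ?thesis
  proof (cases "a \<ge> 0")
    case a: True
    show ?thesis
    proof (cases "b \<ge> 0")
      case True
      then show ?thesis using a
        by (simp add: iter_def nat_add_distrib funpow_add)
    next
      case False
      have "nat a - nat (-b) = nat (a+b)" "nat (-b) - nat a = nat (-a-b)" using a False by auto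
      then show ?thesis using a False c2[of "nat a" "nat (-b)"]
        by (auto simp: iter_def split: if_splits)
    qed
  next
    case a: False
    show ?thesis
    proof (cases "b \<ge> 0")
      case True
      have "nat (-a) - nat b = nat (-a-b)" "nat b - nat (-a) = nat (a+b)" using a True by auto
      then show ?thesis using a True c1[of "nat (-a)" "nat b"]
        by (auto simp: iter_def split: if_splits)
    next
      case False
      then have "nat (- a - b) = nat (-a) + nat (-b)" using a by auto
      then show ?thesis using a False
        by (simp add: iter_def funpow_add)
    qed
  qed
qed

lemma iter_comm: "x \<in> G \<Longrightarrow> iter G \<alpha> a (iter G \<alpha> b x) = iter G \<alpha> b (iter G \<alpha> a x)"
  by (simp add: iter_add add.commute)

lemma iter_inv: "x \<in> G \<Longrightarrow> iter G \<alpha> a (iter G \<alpha> (-a) x) = x"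
  using iter_add[of x a "-a"] by (simp add: iter_def)

end


lemma cyc_asym: "cyc_pos a b c \<Longrightarrow> \<not> cyc_pos c b a"
  unfolding cyc_pos_def by auto

lemma cyc_total: "a \<noteq> b \<Longrightarrow> b \<noteq> c \<Longrightarrow> a \<noteq> c \<Longrightarrow> cyc_pos a b c \<or> cyc_pos c b a"
  unfolding cyc_pos_def by auto

lemma cyc_distinct: "cyc_pos a b c \<Longrightarrow> a \<noteq> b \<and> b \<noteq> c \<and> a \<noteq> c"
  unfolding cyc_pos_def by auto

lemma cyc_inc:
  assumes "\<And>u v. u \<in> {a,b,c} \<Longrightarrow> v \<in> {a,b,c} \<Longrightarrow> u < v \<Longrightarrow> \<phi> u < \<phi> v" "cyc_pos a b c"
  shows "cyc_pos (\<phi> a) (\<phi> b) (\<phi> c)"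
  using assms(2) unfolding cyc_pos_def
  by (elim disjE conjE) (use assms(1) in auto)

lemma cyc_dec:
  assumes "\<And>u v. u \<in> {a,b,c} \<Longrightarrow> v \<in> {a,b,c} \<Longrightarrow> u < v \<Longrightarrow> \<phi> v < \<phi> u" "cyc_pos a b c"
  shows "cyc_pos (\<phi> c) (\<phi> b) (\<phi> a)"
  using assms(2) unfolding cyc_pos_def
  by (elim disjE conjE) (use assms(1) in auto)

definition rot :: "real \<Rightarrow> real \<Rightarrow> real" where
  "rot c v = (if c \<le> v then v - c else v - c + 1)"

lemma rot_range: "c \<in> {0..<1} \<Longrightarrow> v \<in> {0..<1} \<Longrightarrow> rot c v \<in> {0..<1}"
  unfolding rot_def by auto

lemma rot_zero: "c \<in> {0..<1} \<Longrightarrow> v \<in> {0..<1} \<Longrightarrow> rot c v = 0 \<longleftrightarrow> v = c"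
  unfolding rot_def by auto

lemma cyc_rot:
  assumes "c \<in> {0..<1}" "a \<in> {0..<1}" "b \<in> {0..<1}" "d \<in> {0..<1}"
  shows "cyc_pos a b d \<longleftrightarrow> cyc_pos (rot c a) (rot c b) (rot c d)"
  using assms unfolding cyc_pos_def rot_def by auto

lemma cyc_rot0:
  assumes "c \<in> {0..<1}" "a \<in> {0..<1}" "b \<in> {0..<1}"
  shows "cyc_pos c a b \<longleftrightarrow> a \<noteq> c \<and> b \<noteq> c \<and> rot c a < rot c b"
  using assms unfolding cyc_pos_def rot_def by auto

lemma cyc_rev0:
  fixes g :: "real \<Rightarrow> real"
  assumes g0: "g 0 = 0" and gr: "\<And>u. u \<in> {0<..<1} \<Longrightarrow> g u \<in> {0<..<1}"
    and gd: "\<And>u v. u \<in> {0<..<1} \<Longrightarrow> v \<in> {0<..<1} \<Longrightarrow> u < v \<Longrightarrow> g v < g u"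
    and abc: "a \<in> {0..<1}" "b \<in> {0..<1}" "c \<in> {0..<1}" and cy: "cyc_pos a b c"
  shows "cyc_pos (g c) (g b) (g a)"
proof -
  have d: "a \<noteq> b" "b \<noteq> c" "a \<noteq> c" using cyc_distinct[OF cy] by auto
  consider "a = 0" | "b = 0" | "c = 0" | "a \<noteq> 0" "b \<noteq> 0" "c \<noteq> 0" by blast
  then show ?thesis
  proof cases
    case 1
    then have "b \<in> {0<..<1}" "c \<in> {0<..<1}" using abc d by auto
    then show ?thesis using 1 cy gr[of b] gr[of c] gd[of b c] g0 unfolding cyc_pos_def by auto
  next
    case 2
    then have "a \<in> {0<..<1}" "c \<in> {0<..<1}" using abc d by auto
    then show ?thesis using 2 cy gr[of a] gr[of c] gd[of a c] gd[of c a] g0 unfolding cyc_pos_def by auto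
  next
    case 3
    then have "a \<in> {0<..<1}" "b \<in> {0<..<1}" using abc d by auto
    then show ?thesis using 3 cy gr[of a] gr[of b] gd[of a b] g0 unfolding cyc_pos_def by auto
  next
    case 4
    then have "a \<in> {0<..<1}" "b \<in> {0<..<1}" "c \<in> {0<..<1}" using abc by auto
    then show ?thesis by (intro cyc_dec[OF _ cy]) (auto intro: gd)
  qed
qed

lemma cyc_inc0:
  fixes g :: "real \<Rightarrow> real"
  assumes g0: "g 0 = 0" and gr: "\<And>u. u \<in> {0<..<1} \<Longrightarrow> g u \<in> {0<..<1}"
    and gd: "\<And>u v. u \<in> {0<..<1} \<Longrightarrow> v \<in> {0<..<1} \<Longrightarrow> u < v \<Longrightarrow> g u < g v"
    and abc: "a \<in> {0..<1}" "b \<in> {0..<1}" "c \<in> {0..<1}" and cy: "cyc_pos a b c"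
  shows "cyc_pos (g a) (g b) (g c)"
proof (rule cyc_inc[OF _ cy])
  fix u v assume "u \<in> {a,b,c}" "v \<in> {a,b,c}" "u < v"
  then have "u \<in> {0..<1}" "v \<in> {0<..<1}" using abc by auto
  then show "g u < g v" using gr[of v] gd[of u v] g0 \<open>u < v\<close> by (cases "u = 0") auto
qed

lemma cont_inj_mono_closed:
  fixes f :: "real \<Rightarrow> real"
  assumes "continuous_on {a..b} f" "inj_on f {a..b}"
  shows "(\<forall>x\<in>{a..b}. \<forall>y\<in>{a..b}. x < y \<longrightarrow> f x < f y) \<or> (\<forall>x\<in>{a..b}. \<forall>y\<in>{a..b}. x < y \<longrightarrow> f y < f x)"
proof (cases "a < b")
  case False
  then show ?thesis by auto
next
  case ab: True
  have fab: "f a \<noteq> f b" using assms(2) ab by (auto dest: inj_onD)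
  have mid: "(f a < f x \<and> f x < f b) \<or> (f b < f x \<and> f x < f a)" if "a < x" "x < b" for x
    by (rule continuous_inj_imp_mono[OF that assms])
  have sub: "(f x < f y \<and> f y < f z) \<or> (f z < f y \<and> f y < f x)" if "a \<le> x" "x < y" "y < z" "z \<le> b" for x y z
    by (rule continuous_inj_imp_mono[OF that(2,3)])
       (use that in \<open>auto intro: continuous_on_subset[OF assms(1)] inj_on_subset[OF assms(2)]\<close>)
  show ?thesis
  proof (cases "f a < f b")
    case True
    have "f x < f y" if "x \<in> {a..b}" "y \<in> {a..b}" "x < y" for x y
    proof -
      have "x = a \<or> a < x" "y = b \<or> y < b" using that by auto
      then show ?thesis
      proof (elim disjE)
        assume "x = a" "y = b" then show ?thesis using True by simp
      next
        assume "x = a" "y < b" then show ?thesis using mid[of y] True that by auto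
      next
        assume "a < x" "y = b" then show ?thesis using mid[of x] True that by auto
      next
        assume "a < x" "y < b" then show ?thesis using sub[of a x y] mid[of y] True that by auto
      qed
    qed
    then show ?thesis by blast
  next
    case False
    then have F: "f b < f a" using fab by auto
    have "f y < f x" if "x \<in> {a..b}" "y \<in> {a..b}" "x < y" for x y
    proof -
      have "x = a \<or> a < x" "y = b \<or> y < b" using that by auto
      then show ?thesis
      proof (elim disjE)
        assume "x = a" "y = b" then show ?thesis using F by simp
      next
        assume "x = a" "y < b" then show ?thesis using mid[of y] F that by auto
      next
        assume "a < x" "y = b" then show ?thesis using mid[of x] F that by auto
      next
        assume "a < x" "y < b" then show ?thesis using sub[of a x y] mid[of y] F that by auto
      qed
    qed
    then show ?thesis by blast
  qed
qed

lemma cont_inj_mono_open01: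
  fixes f :: "real \<Rightarrow> real"
  assumes "continuous_on {0<..<1} f" "inj_on f {0<..<1}"
  shows "(\<forall>x\<in>{0<..<1}. \<forall>y\<in>{0<..<1}. x < y \<longrightarrow> f x < f y) \<or> (\<forall>x\<in>{0<..<1}. \<forall>y\<in>{0<..<1}. x < y \<longrightarrow> f y < f x)"
proof -
  have M: "(\<forall>x\<in>{a..b}. \<forall>y\<in>{a..b}. x < y \<longrightarrow> f x < f y) \<or> (\<forall>x\<in>{a..b}. \<forall>y\<in>{a..b}. x < y \<longrightarrow> f y < f x)"
    if "0 < a" "b < 1" for a b
    using that by (intro cont_inj_mono_closed) (auto intro: continuous_on_subset[OF assms(1)] inj_on_subset[OF assms(2)])
  define a0 :: real where "a0 = 1/4"
  define b0 :: real where "b0 = 3/4"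
  show ?thesis
  proof (cases "f a0 < f b0")
    case True
    have "f x < f y" if "x \<in> {0<..<1}" "y \<in> {0<..<1}" "x < y" for x y
    proof -
      let ?a = "min x a0" and ?b = "max y b0"
      have "0 < ?a" "?b < 1" using that by (auto simp: a0_def b0_def)
      have mem: "a0 \<in> {?a..?b}" "b0 \<in> {?a..?b}" "x \<in> {?a..?b}" "y \<in> {?a..?b}" "a0 < b0"
        using that by (auto simp: a0_def b0_def)
      from M[OF \<open>0 < ?a\<close> \<open>?b < 1\<close>] show ?thesis
      proof (elim disjE)
        assume inc: "\<forall>x\<in>{?a..?b}. \<forall>y\<in>{?a..?b}. x < y \<longrightarrow> f x < f y"
        show ?thesis using inc mem that by blast
      next
        assume dec: "\<forall>x\<in>{?a..?b}. \<forall>y\<in>{?a..?b}. x < y \<longrightarrow> f y < f x"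
        have "f b0 < f a0" using dec mem by blast
        then show ?thesis using True by simp
      qed
    qed
    then show ?thesis by blast
  next
    case False
    have "f a0 \<noteq> f b0" using assms(2) by (auto simp: a0_def b0_def dest: inj_onD)
    then have F: "f b0 < f a0" using False by auto
    have "f y < f x" if "x \<in> {0<..<1}" "y \<in> {0<..<1}" "x < y" for x y
    proof -
      let ?a = "min x a0" and ?b = "max y b0"
      have "0 < ?a" "?b < 1" using that by (auto simp: a0_def b0_def)
      have mem: "a0 \<in> {?a..?b}" "b0 \<in> {?a..?b}" "x \<in> {?a..?b}" "y \<in> {?a..?b}" "a0 < b0"
        using that by (auto simp: a0_def b0_def)
      from M[OF \<open>0 < ?a\<close> \<open>?b < 1\<close>] show ?thesis
      proof (elim disjE)
        assume dec: "\<forall>x\<in>{?a..?b}. \<forall>y\<in>{?a..?b}. x < y \<longrightarrow> f y < f x"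
        show ?thesis using dec mem that by blast
      next
        assume inc: "\<forall>x\<in>{?a..?b}. \<forall>y\<in>{?a..?b}. x < y \<longrightarrow> f x < f y"
        have "f a0 < f b0" using inc mem by blast
        then show ?thesis using F by simp
      qed
    qed
    then show ?thesis by blast
  qed
qed

lemma chart_cont:
  fixes \<sigma> :: "real \<Rightarrow> 'a::heine_borel"
  assumes sc: "continuous_on {0..1} \<sigma>"
    and Q: "\<And>x. x \<in> S \<Longrightarrow> Q x \<in> {0..1} \<and> \<sigma> (Q x) = x"
    and x0: "x0 \<in> S" and un: "\<And>v. v \<in> {0..1} \<Longrightarrow> \<sigma> v = x0 \<Longrightarrow> v = Q x0"
  shows "continuous (at x0 within S) Q"
  unfolding continuous_within_eps_delta
proof (intro allI impI)
  fix e :: real assume e: "e > 0"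
  define K where "K = {0..1} \<inter> {v. e \<le> dist v (Q x0)}"
  have cK: "compact K" unfolding K_def
    by (intro compact_Int_closed compact_Icc closed_Collect_le continuous_intros)
  have "compact (\<sigma> ` K)"
    by (rule compact_continuous_image[OF continuous_on_subset[OF sc] cK]) (auto simp: K_def)
  then have cl: "closed (\<sigma> ` K)" by (rule compact_imp_closed)
  have nx: "x0 \<notin> \<sigma> ` K"
  proof
    assume "x0 \<in> \<sigma> ` K"
    then obtain v where v: "v \<in> K" "\<sigma> v = x0" by auto
    then have "v = Q x0" using un by (auto simp: K_def)
    then show False using v e by (auto simp: K_def)
  qed
  obtain d where d: "d > 0" "\<forall>y\<in>\<sigma> ` K. d \<le> dist x0 y"
    using separate_point_closed[OF cl nx] by blast
  show "\<exists>d>0. \<forall>x'\<in>S. dist x' x0 < d \<longrightarrow> dist (Q x') (Q x0) < e"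
  proof (intro exI conjI ballI impI)
    fix x' assume x': "x' \<in> S" "dist x' x0 < d"
    show "dist (Q x') (Q x0) < e"
    proof (rule ccontr)
      assume "\<not> dist (Q x') (Q x0) < e"
      then have "Q x' \<in> K" using Q[OF x'(1)] by (auto simp: K_def)
      then have "\<sigma> (Q x') \<in> \<sigma> ` K" by blast
      then have "d \<le> dist x0 x'" using d Q[OF x'(1)] by auto
      then show False using x'(2) by (simp add: dist_commute)
    qed
  qed (rule d(1))
qed

lemma chart_conv:
  fixes \<sigma> :: "real \<Rightarrow> 'a::heine_borel"
  assumes sc: "continuous_on {0..1} \<sigma>" and sS: "\<sigma> ` {0..1} \<subseteq> S"
    and Q: "\<And>x. x \<in> S \<Longrightarrow> Q x \<in> {0..1} \<and> \<sigma> (Q x) = x"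
    and hc: "continuous_on S h" and hS: "\<And>x. x \<in> S \<Longrightarrow> h x \<in> S"
    and hm: "\<And>x y. x \<in> S \<Longrightarrow> y \<in> S \<Longrightarrow> Q x \<le> Q y \<Longrightarrow> Q (h x) \<le> Q (h y)"
    and t: "t \<in> S"
  shows "\<exists>L\<in>S. ((\<lambda>n. (h ^^ n) t) \<longlonglongrightarrow> L) \<and> h L = L"
proof -
  define u where "u n = Q ((h ^^ n) t)" for n
  have inS: "(h ^^ n) t \<in> S" for n by (induction n) (auto intro: hS t)
  have ur: "u n \<in> {0..1}" for n using Q[OF inS[of n]] by (simp add: u_def)
  have us: "\<sigma> (u n) = (h ^^ n) t" for n using Q[OF inS[of n]] by (simp add: u_def)
  have step: "u n \<le> u (Suc n) \<Longrightarrow> u (Suc n) \<le> u (Suc (Suc n))" for n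
    unfolding u_def using hm[OF inS[of n] inS[of "Suc n"]] by simp
  have step': "u (Suc n) \<le> u n \<Longrightarrow> u (Suc (Suc n)) \<le> u (Suc n)" for n
    unfolding u_def using hm[OF inS[of "Suc n"] inS[of n]] by simp
  have bd: "bdd_above (range u)" "bdd_below (range u)" using ur
    by (auto intro!: bdd_aboveI[of _ 1] bdd_belowI[of _ 0])
  obtain l where l: "u \<longlonglongrightarrow> l"
  proof (cases "u 0 \<le> u 1")
    case True
    have "u n \<le> u (Suc n)" for n by (induction n) (use True step in auto)
    then have "incseq u" by (simp add: incseq_SucI)
    then show ?thesis using LIMSEQ_incseq_SUP[OF bd(1)] that by blast
  next
    case False
    have "u (Suc n) \<le> u n" for n by (induction n) (use False step' in auto)
    then have "decseq u" by (simp add: decseq_SucI)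
    then show ?thesis using LIMSEQ_decseq_INF[OF bd(2)] that by blast
  qed
  have l01: "l \<in> {0..1}"
    using closed_atLeastAtMost l ur by (metis closed_sequentially)
  have conv: "(\<lambda>n. (h ^^ n) t) \<longlonglongrightarrow> \<sigma> l"
  proof -
    have "(\<lambda>n. \<sigma> (u n)) \<longlonglongrightarrow> \<sigma> l"
      by (rule continuous_on_tendsto_compose[OF sc l l01]) (use ur in auto)
    then show ?thesis using us by simp
  qed
  have LS: "\<sigma> l \<in> S" using sS l01 by blast
  have "(\<lambda>n. h ((h ^^ n) t)) \<longlonglongrightarrow> h (\<sigma> l)"
    by (rule continuous_on_tendsto_compose[OF hc conv LS]) (simp add: inS)
  moreover have "(\<lambda>n. h ((h ^^ n) t)) \<longlonglongrightarrow> \<sigma> l"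
    using LIMSEQ_Suc[OF conv] by simp
  ultimately have "h (\<sigma> l) = \<sigma> l" using LIMSEQ_unique by blast
  then show ?thesis using conv LS by blast
qed


lemma prod_shift_eq:
  fixes g :: "nat \<Rightarrow> 'a::field"
  assumes "g m = g 0"
  shows "(\<Prod>i<m. g (Suc i)) = (\<Prod>i<m. g i)"
proof (cases m)
  case 0 then show ?thesis by simp
next
  case (Suc n)
  have A: "(\<Prod>i<Suc m. g i) = g 0 * (\<Prod>i<m. g (Suc i))" by (rule prod.lessThan_Suc_shift)
  have B: "(\<Prod>i<Suc m. g i) = (\<Prod>i<m. g i) * g 0" using assms by simp
  show ?thesis
  proof (cases "g 0 = 0")
    case True
    have z1: "(\<Prod>i<m. g i) = 0" by (intro prod_zero) (use True Suc in auto)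
    have "g (Suc n) = 0" using assms True Suc by simp
    then have z2: "(\<Prod>i<m. g (Suc i)) = 0"
      by (intro prod_zero) (auto intro!: bexI[of _ n] simp: Suc)
    show ?thesis by (simp only: z1 z2)
  next
    case False
    then show ?thesis using A B by (simp add: mult.commute)
  qed
qed

locale diffG = bijG +
  assumes d1: "curve_diff1 G \<alpha>" and d2: "curve_diff1 G (inv_into G \<alpha>)"
    and perf: "\<And>t. t \<in> G \<Longrightarrow> t islimpt G"
begin

abbreviation "\<alpha>' \<equiv> curve_deriv G \<alpha>"

lemma a_der: "t \<in> G \<Longrightarrow> (\<alpha> has_field_derivative \<alpha>' t) (at t within G)"
  using d1 by (simp add: curve_diff1_def)
lemma a'_nz: "t \<in> G \<Longrightarrow> \<alpha>' t \<noteq> 0"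
  using d1 by (simp add: curve_diff1_def)
lemma a'_cont: "continuous_on G \<alpha>'"
  using d1 by (simp add: curve_diff1_def)

lemma a_cont: "continuous_on G \<alpha>"
  using d1 unfolding curve_diff1_def
  by (meson DERIV_continuous_on)
lemma i_cont: "continuous_on G \<iota>"
  using d2 unfolding curve_diff1_def
  by (meson DERIV_continuous_on)

lemma funpow_cont:
  assumes "continuous_on G f" "\<And>x. x \<in> G \<Longrightarrow> f x \<in> G"
  shows "continuous_on G (f ^^ n)"
proof (induction n)
  case 0 then show ?case by (simp add: continuous_on_id)
next
  case (Suc n)
  have "continuous_on G (\<lambda>x. f ((f ^^ n) x))"
    by (rule continuous_on_compose2[OF assms(1) Suc.IH]) (auto intro: funpow_in[of G f] assms(2))
  then show ?case by (simp add: o_def)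
qed

lemma iter_cont: "continuous_on G (iter G \<alpha> k)"
  unfolding iter_def using funpow_cont[OF a_cont a_in] funpow_cont[OF i_cont i_in] by auto

lemma deriv_unique:
  assumes "t \<in> G" "(f has_field_derivative D) (at t within G)"
  shows "curve_deriv G f t = D"
proof -
  have nt: "\<not> trivial_limit (at t within G)" using perf[OF assms(1)] trivial_limit_within by blast
  show ?thesis unfolding curve_deriv_def
  proof (rule the_equality)
    show "(f has_field_derivative D) (at t within G)" by (rule assms(2))
  next
    fix E assume "(f has_field_derivative E) (at t within G)"
    then show "E = D" using assms(2) nt unfolding has_field_derivative_iff
      using tendsto_unique by blast
  qed
qed

lemma deriv_funpow:
  assumes "t \<in> G"
  shows "((\<alpha> ^^ n) has_field_derivative (\<Prod>i<n. \<alpha>' ((\<alpha> ^^ i) t))) (at t within G)"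
proof (induction n)
  case 0
  then show ?case by (simp add: DERIV_ident id_def)
next
  case (Suc n)
  have s: "(\<alpha> ^^ n) ` G \<subseteq> G" using funpow_in[of G \<alpha>, OF a_in] by blast
  have "(\<alpha> has_field_derivative \<alpha>' ((\<alpha> ^^ n) t)) (at ((\<alpha> ^^ n) t) within ((\<alpha> ^^ n) ` G))"
    by (rule DERIV_subset[OF a_der s]) (rule funpow_in[of G \<alpha>, OF a_in assms])
  from DERIV_image_chain[OF this Suc.IH]
  show ?case by (simp add: mult.commute o_def)
qed

definition "Dm m t = (\<Prod>i<m. \<alpha>' ((\<alpha> ^^ i) t))"

lemma curve_deriv_funpow: "t \<in> G \<Longrightarrow> curve_deriv G (\<alpha> ^^ m) t = Dm m t"
  unfolding Dm_def by (rule deriv_unique[OF _ deriv_funpow])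

lemma Dm_nz: "t \<in> G \<Longrightarrow> Dm m t \<noteq> 0"
  unfolding Dm_def using a'_nz funpow_in[of G \<alpha>, OF a_in] by (simp add: prod_zero_iff)

lemma comp_cont_G: "continuous_on G f \<Longrightarrow> continuous_on G (\<lambda>t. f ((\<alpha> ^^ i) t))"
  by (rule continuous_on_compose2[of G f G "\<alpha> ^^ i"])
     (use funpow_cont[OF a_cont a_in, of i] funpow_in[of G \<alpha>, OF a_in] in auto)

lemma Dm_cont: "continuous_on G (Dm m)"
  unfolding Dm_def by (intro continuous_on_prod comp_cont_G a'_cont)

definition "Eta m (f::complex \<Rightarrow> complex) (g::complex \<Rightarrow> complex) aX bX (i::nat) t =
   (let D = norm (Dm m t)
    in norm (\<Prod>i<m. f ((\<alpha> ^^ i) t)) - norm (\<Prod>i<m. g ((\<alpha> ^^ i) t)) *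
        (if i = 0 then min (D powr (- aX)) (D powr (- bX)) else max (D powr (- aX)) (D powr (- bX))))"

lemma Eta_cont:
  assumes "continuous_on G f" "continuous_on G g"
  shows "continuous_on G (Eta m f g aX bX i)"
proof -
  have c1: "continuous_on G (\<lambda>t. norm (Dm m t))" by (intro continuous_intros Dm_cont)
  have nz: "\<forall>t\<in>G. norm (Dm m t) \<noteq> 0" using Dm_nz by simp
  have cf: "continuous_on G (\<lambda>t. \<Prod>i<m. f ((\<alpha> ^^ i) t))" by (rule continuous_on_prod) (rule comp_cont_G[OF assms(1)])
  have cg: "continuous_on G (\<lambda>t. \<Prod>i<m. g ((\<alpha> ^^ i) t))" by (rule continuous_on_prod) (rule comp_cont_G[OF assms(2)])
  have p1: "continuous_on G (\<lambda>t. norm (Dm m t) powr (- aX))"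
    by (rule continuous_on_powr[OF c1 continuous_on_const nz])
  have p2: "continuous_on G (\<lambda>t. norm (Dm m t) powr (- bX))"
    by (rule continuous_on_powr[OF c1 continuous_on_const nz])
  have A: "continuous_on G (\<lambda>t. norm (\<Prod>i<m. f ((\<alpha> ^^ i) t)) - norm (\<Prod>i<m. g ((\<alpha> ^^ i) t)) *
        min (norm (Dm m t) powr (- aX)) (norm (Dm m t) powr (- bX)))"
    by (rule continuous_on_diff[OF continuous_on_norm[OF cf] continuous_on_mult[OF continuous_on_norm[OF cg] continuous_on_min[OF p1 p2]]])
  have B: "continuous_on G (\<lambda>t. norm (\<Prod>i<m. f ((\<alpha> ^^ i) t)) - norm (\<Prod>i<m. g ((\<alpha> ^^ i) t)) *
        max (norm (Dm m t) powr (- aX)) (norm (Dm m t) powr (- bX)))"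
    by (rule continuous_on_diff[OF continuous_on_norm[OF cf] continuous_on_mult[OF continuous_on_norm[OF cg] continuous_on_max[OF p1 p2]]])
  show ?thesis unfolding Eta_def Let_def
    using A B by (cases "i = 0") simp_all
qed

lemma Eta_alpha:
  assumes "\<tau> \<in> G" "(\<alpha> ^^ m) \<tau> = \<tau>"
  shows "Eta m f g aX bX i (\<alpha> \<tau>) = Eta m f g aX bX i \<tau>"
proof -
  have e: "(\<alpha> ^^ i) (\<alpha> \<tau>) = (\<alpha> ^^ Suc i) \<tau>" for i by (simp add: funpow_swap1)
  have pf: "(\<Prod>i<m. h ((\<alpha> ^^ i) (\<alpha> \<tau>))) = (\<Prod>i<m. h ((\<alpha> ^^ i) \<tau>))" for h :: "complex \<Rightarrow> complex"
    unfolding e by (rule prod_shift_eq[where g = "\<lambda>i. h ((\<alpha> ^^ i) \<tau>)"]) (simp add: assms(2))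
  show ?thesis by (simp only: Eta_def Dm_def pf)
qed

lemma fix_alpha:
  assumes "\<tau> \<in> G" "(\<alpha> ^^ m) \<tau> = \<tau>"
  shows "(\<alpha> ^^ m) (\<alpha> \<tau>) = \<alpha> \<tau>"
  using assms by (metis funpow_swap1)

lemma fix_iota:
  assumes "\<tau> \<in> G" "(\<alpha> ^^ m) \<tau> = \<tau>"
  shows "(\<alpha> ^^ m) (\<iota> \<tau>) = \<iota> \<tau>"
proof -
  have "\<alpha> ((\<alpha> ^^ m) (\<iota> \<tau>)) = (\<alpha> ^^ m) (\<alpha> (\<iota> \<tau>))" by (metis funpow_swap1)
  also have "\<dots> = \<alpha> (\<iota> \<tau>)" using assms ai by simp
  finally show ?thesis using a_inj funpow_in[of G \<alpha>, OF a_in] i_in assms(1) by blast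
qed

lemma Eta_iota:
  assumes "\<tau> \<in> G" "(\<alpha> ^^ m) \<tau> = \<tau>"
  shows "Eta m f g aX bX i (\<iota> \<tau>) = Eta m f g aX bX i \<tau>"
proof -
  have "Eta m f g aX bX i (\<alpha> (\<iota> \<tau>)) = Eta m f g aX bX i (\<iota> \<tau>)"
    by (rule Eta_alpha[OF i_in[OF assms(1)] fix_iota[OF assms]])
  then show ?thesis by (simp add: ai[OF assms(1)])
qed

lemma Eta_iter:
  assumes "\<tau> \<in> G" "(\<alpha> ^^ m) \<tau> = \<tau>"
  shows "Eta m f g aX bX i (iter G \<alpha> k \<tau>) = Eta m f g aX bX i \<tau>"
proof -
  have A: "(\<alpha> ^^ n) \<tau> \<in> G \<and> (\<alpha> ^^ m) ((\<alpha> ^^ n) \<tau>) = (\<alpha> ^^ n) \<tau> \<and>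
           Eta m f g aX bX i ((\<alpha> ^^ n) \<tau>) = Eta m f g aX bX i \<tau>" for n
  proof (induction n)
    case 0 then show ?case using assms by simp
  next
    case (Suc n)
    then have h: "(\<alpha> ^^ n) \<tau> \<in> G" "(\<alpha> ^^ m) ((\<alpha> ^^ n) \<tau>) = (\<alpha> ^^ n) \<tau>"
      "Eta m f g aX bX i ((\<alpha> ^^ n) \<tau>) = Eta m f g aX bX i \<tau>" by auto
    show ?case using a_in[OF h(1)] fix_alpha[OF h(1,2)] Eta_alpha[OF h(1,2), of f g aX bX i] h(3) by simp
  qed
  have B: "(\<iota> ^^ n) \<tau> \<in> G \<and> (\<alpha> ^^ m) ((\<iota> ^^ n) \<tau>) = (\<iota> ^^ n) \<tau> \<and>
           Eta m f g aX bX i ((\<iota> ^^ n) \<tau>) = Eta m f g aX bX i \<tau>" for n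
  proof (induction n)
    case 0 then show ?case using assms by simp
  next
    case (Suc n)
    then have h: "(\<iota> ^^ n) \<tau> \<in> G" "(\<alpha> ^^ m) ((\<iota> ^^ n) \<tau>) = (\<iota> ^^ n) \<tau>"
      "Eta m f g aX bX i ((\<iota> ^^ n) \<tau>) = Eta m f g aX bX i \<tau>" by auto
    show ?case using i_in[OF h(1)] fix_iota[OF h(1,2)] Eta_iota[OF h(1,2), of f g aX bX i] h(3) by simp
  qed
  show ?thesis unfolding iter_def using A B by simp
qed

end


locale jc =
  fixes \<gamma> :: "real \<Rightarrow> complex"
  assumes sp: "simple_path \<gamma>"
begin

abbreviation "\<Gamma> \<equiv> path_image \<gamma>"
abbreviation "P \<equiv> param \<gamma>"
abbreviation "cl \<equiv> pathfinish \<gamma> = pathstart \<gamma>"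

lemma gcont: "continuous_on {0..1} \<gamma>"
  using sp by (simp add: simple_path_def path_def)

lemma lf: "a \<in> {0..1} \<Longrightarrow> b \<in> {0..1} \<Longrightarrow> \<gamma> a = \<gamma> b \<Longrightarrow> a = b \<or> a = 0 \<and> b = 1 \<or> a = 1 \<and> b = 0"
  using sp by (simp add: simple_path_def loop_free_def)

lemma Gimg: "\<Gamma> = \<gamma> ` {0..1}"
  by (simp add: path_image_def)

lemma cl_img: assumes "cl" shows "\<Gamma> = \<gamma> ` {0..<1}"
proof
  show "\<Gamma> \<subseteq> \<gamma> ` {0..<1}"
  proof
    fix x assume "x \<in> \<Gamma>"
    then obtain s where s: "s \<in> {0..1}" "x = \<gamma> s" by (auto simp: Gimg)
    show "x \<in> \<gamma> ` {0..<1}"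
    proof (cases "s = 1")
      case True
      then have "x = \<gamma> 0" using assms s by (simp add: pathfinish_def pathstart_def)
      then show ?thesis by force
    next
      case False then show ?thesis using s by force
    qed
  qed
  show "\<gamma> ` {0..<1} \<subseteq> \<Gamma>" by (auto simp: Gimg)
qed

lemma cl_inj: "inj_on \<gamma> {0..<1}"
  by (rule inj_onI) (use lf in force)

lemma cl_P: assumes "cl" "x \<in> \<Gamma>" shows "P x \<in> {0..<1} \<and> \<gamma> (P x) = x"
proof -
  have "x \<in> \<gamma> ` {0..<1}" using assms cl_img by blast
  then show ?thesis using assms(1) by (simp add: param_def inv_into_into f_inv_into_f del: atLeastLessThan_iff)
qed

lemma cl_Pg: assumes "cl" "s \<in> {0..<1}" shows "P (\<gamma> s) = s"
  using assms by (simp add: param_def inv_into_f_f[OF cl_inj] del: atLeastLessThan_iff)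

lemma arc_inj: assumes "\<not> cl" shows "inj_on \<gamma> {0..1}"
proof (rule inj_onI)
  fix a b assume ab: "a \<in> {0..1}" "b \<in> {0..1}" "\<gamma> a = \<gamma> b"
  have "\<gamma> 0 \<noteq> \<gamma> 1" using assms by (simp add: pathfinish_def pathstart_def)
  then show "a = b" using lf[OF ab] ab by auto
qed

lemma arc_P: assumes "\<not> cl" "x \<in> \<Gamma>" shows "P x \<in> {0..1} \<and> \<gamma> (P x) = x"
  using assms by (simp add: param_def Gimg inv_into_into f_inv_into_f del: atLeastAtMost_iff)

lemma arc_Pg: assumes "\<not> cl" "s \<in> {0..1}" shows "P (\<gamma> s) = s"
  using assms by (simp add: param_def inv_into_f_f[OF arc_inj[OF assms(1)]] del: atLeastAtMost_iff)

lemma P01: "x \<in> \<Gamma> \<Longrightarrow> P x \<in> {0..1} \<and> \<gamma> (P x) = x"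
proof (cases "cl")
  case True
  assume "x \<in> \<Gamma>"
  then show ?thesis using cl_P[OF True] by fastforce
next
  case False
  assume "x \<in> \<Gamma>"
  then show ?thesis using arc_P[OF False] by fastforce
qed

lemma P_inj: "x \<in> \<Gamma> \<Longrightarrow> y \<in> \<Gamma> \<Longrightarrow> P x = P y \<Longrightarrow> x = y"
proof -
  assume h: "x \<in> \<Gamma>" "y \<in> \<Gamma>" "P x = P y"
  have "x = \<gamma> (P x)" using P01[OF h(1)] by simp
  also have "\<dots> = \<gamma> (P y)" using h(3) by simp
  also have "\<dots> = y" using P01[OF h(2)] by simp
  finally show "x = y" .
qed

lemma g_in: "s \<in> {0..1} \<Longrightarrow> \<gamma> s \<in> \<Gamma>"
  by (simp add: Gimg)

definition "pres h \<longleftrightarrow> (\<forall>x\<in>\<Gamma>. \<forall>y\<in>\<Gamma>. \<forall>z\<in>\<Gamma>. cyc_pos (P x) (P y) (P z) \<longrightarrow> cyc_pos (P (h x)) (P (h y)) (P (h z)))"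
definition "revs h \<longleftrightarrow> (\<forall>x\<in>\<Gamma>. \<forall>y\<in>\<Gamma>. \<forall>z\<in>\<Gamma>. cyc_pos (P x) (P y) (P z) \<longrightarrow> cyc_pos (P (h z)) (P (h y)) (P (h x)))"

lemma orient_pres_eq: "orient_pres \<gamma> h = pres h"
  by (simp add: orient_pres_def pres_def)

lemma pres_comp: "pres h \<Longrightarrow> pres k \<Longrightarrow> (\<And>x. x \<in> \<Gamma> \<Longrightarrow> k x \<in> \<Gamma>) \<Longrightarrow> pres (\<lambda>x. h (k x))"
  unfolding pres_def by simp
lemma revs_comp: "revs h \<Longrightarrow> revs k \<Longrightarrow> (\<And>x. x \<in> \<Gamma> \<Longrightarrow> k x \<in> \<Gamma>) \<Longrightarrow> pres (\<lambda>x. h (k x))"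
  unfolding pres_def revs_def by simp

lemma pres_funpow: assumes "pres h" "\<And>x. x \<in> \<Gamma> \<Longrightarrow> h x \<in> \<Gamma>" shows "pres (h ^^ n)"
proof (induction n)
  case 0 then show ?case by (simp add: pres_def)
next
  case (Suc n)
  have "pres (\<lambda>x. h ((h ^^ n) x))"
    by (rule pres_comp[OF assms(1) Suc.IH]) (rule funpow_in[of \<Gamma> h, OF assms(2)])
  then show ?case by (simp add: o_def)
qed

lemma P_dist: "x \<in> \<Gamma> \<Longrightarrow> y \<in> \<Gamma> \<Longrightarrow> x \<noteq> y \<Longrightarrow> P x \<noteq> P y"
  using P_inj by blast

lemma pres_inv:
  assumes b: "bij_betw h \<Gamma> \<Gamma>" and p: "pres h"
  shows "pres (inv_into \<Gamma> h)"
  unfolding pres_def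
proof (intro ballI impI)
  fix x y z assume xyz: "x \<in> \<Gamma>" "y \<in> \<Gamma>" "z \<in> \<Gamma>" and c: "cyc_pos (P x) (P y) (P z)"
  let ?i = "inv_into \<Gamma> h"
  have ii: "?i w \<in> \<Gamma>" "h (?i w) = w" if "w \<in> \<Gamma>" for w
    by (rule bij_betw_apply[OF bij_betw_inv_into[OF b] that], rule bij_betw_inv_into_right[OF b that])
  have d: "x \<noteq> y" "y \<noteq> z" "x \<noteq> z" using cyc_distinct[OF c] by auto
  have iinj: "w1 = w2" if "w1 \<in> \<Gamma>" "w2 \<in> \<Gamma>" "?i w1 = ?i w2" for w1 w2
  proof -
    have "w1 = h (?i w1)" using ii(2)[OF that(1)] by simp
    also have "\<dots> = h (?i w2)" using that(3) by simp
    also have "\<dots> = w2" using ii(2)[OF that(2)] by simp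
    finally show ?thesis .
  qed
  have ne: "P (?i a) \<noteq> P (?i b)" if "a \<in> \<Gamma>" "b \<in> \<Gamma>" "a \<noteq> b" for a b
  proof
    assume "P (?i a) = P (?i b)"
    then have "?i a = ?i b" by (rule P_inj[OF ii(1)[OF that(1)] ii(1)[OF that(2)]])
    then show False using iinj that by blast
  qed
  have d': "P (?i x) \<noteq> P (?i y)" "P (?i y) \<noteq> P (?i z)" "P (?i x) \<noteq> P (?i z)"
    using ne xyz d by auto
  show "cyc_pos (P (?i x)) (P (?i y)) (P (?i z))"
  proof (rule ccontr)
    assume "\<not> ?thesis"
    then have "cyc_pos (P (?i z)) (P (?i y)) (P (?i x))"
      using cyc_total[OF d'] by blast
    then have "cyc_pos (P (h (?i z))) (P (h (?i y))) (P (h (?i x)))"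
      using p ii(1)[OF xyz(1)] ii(1)[OF xyz(2)] ii(1)[OF xyz(3)] unfolding pres_def by blast
    then have "cyc_pos (P z) (P y) (P x)" using ii(2) xyz by simp
    then show False using cyc_asym[OF c] by simp
  qed
qed

lemma revs_inv:
  assumes b: "bij_betw h \<Gamma> \<Gamma>" and p: "revs h"
  shows "revs (inv_into \<Gamma> h)"
  unfolding revs_def
proof (intro ballI impI)
  fix x y z assume xyz: "x \<in> \<Gamma>" "y \<in> \<Gamma>" "z \<in> \<Gamma>" and c: "cyc_pos (P x) (P y) (P z)"
  let ?i = "inv_into \<Gamma> h"
  have ii: "?i w \<in> \<Gamma>" "h (?i w) = w" if "w \<in> \<Gamma>" for w
    by (rule bij_betw_apply[OF bij_betw_inv_into[OF b] that], rule bij_betw_inv_into_right[OF b that])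
  have d: "x \<noteq> y" "y \<noteq> z" "x \<noteq> z" using cyc_distinct[OF c] by auto
  have iinj: "w1 = w2" if "w1 \<in> \<Gamma>" "w2 \<in> \<Gamma>" "?i w1 = ?i w2" for w1 w2
  proof -
    have "w1 = h (?i w1)" using ii(2)[OF that(1)] by simp
    also have "\<dots> = h (?i w2)" using that(3) by simp
    also have "\<dots> = w2" using ii(2)[OF that(2)] by simp
    finally show ?thesis .
  qed
  have ne: "P (?i a) \<noteq> P (?i b)" if "a \<in> \<Gamma>" "b \<in> \<Gamma>" "a \<noteq> b" for a b
  proof
    assume "P (?i a) = P (?i b)"
    then have "?i a = ?i b" by (rule P_inj[OF ii(1)[OF that(1)] ii(1)[OF that(2)]])
    then show False using iinj that by blast
  qed
  have d': "P (?i x) \<noteq> P (?i y)" "P (?i y) \<noteq> P (?i z)" "P (?i x) \<noteq> P (?i z)"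
    using ne xyz d by auto
  show "cyc_pos (P (?i z)) (P (?i y)) (P (?i x))"
  proof (rule ccontr)
    assume "\<not> ?thesis"
    then have "cyc_pos (P (?i x)) (P (?i y)) (P (?i z))"
      using cyc_total[OF d'] by blast
    then have "cyc_pos (P (h (?i z))) (P (h (?i y))) (P (h (?i x)))"
      using p ii(1)[OF xyz(1)] ii(1)[OF xyz(2)] ii(1)[OF xyz(3)] unfolding revs_def by blast
    then have "cyc_pos (P z) (P y) (P x)" using ii(2) xyz by simp
    then show False using cyc_asym[OF c] by simp
  qed
qed

definition "qinc h \<longleftrightarrow> (\<forall>x\<in>\<Gamma>. \<forall>y\<in>\<Gamma>. P x < P y \<longrightarrow> P (h x) < P (h y))"
definition "qdec h \<longleftrightarrow> (\<forall>x\<in>\<Gamma>. \<forall>y\<in>\<Gamma>. P x < P y \<longrightarrow> P (h y) < P (h x))"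

lemma arc_P_cont: assumes "\<not> cl" shows "continuous_on \<Gamma> P"
proof -
  have "continuous (at x within \<Gamma>) P" if "x \<in> \<Gamma>" for x
  proof (rule chart_cont[OF gcont, of \<Gamma> P x])
    show "\<And>x. x \<in> \<Gamma> \<Longrightarrow> P x \<in> {0..1} \<and> \<gamma> (P x) = x" using P01 by blast
    show "x \<in> \<Gamma>" by fact
    fix v assume "v \<in> {0..1}" "\<gamma> v = x"
    then show "v = P x" using arc_Pg[OF assms] by auto
  qed
  then show ?thesis by (simp add: continuous_on_eq_continuous_within)
qed

lemma arc_dich:
  assumes ncl: "\<not> cl" and b: "bij_betw h \<Gamma> \<Gamma>" and hc: "continuous_on \<Gamma> h"
  shows "qinc h \<or> qdec h"
proof -
  define f where "f s = P (h (\<gamma> s))" for s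
  have hin: "h x \<in> \<Gamma>" if "x \<in> \<Gamma>" for x by (rule bij_betw_apply[OF b that])
  have s1: "\<gamma> ` {0..1} \<subseteq> \<Gamma>" by (simp add: Gimg)
  have c1: "continuous_on {0..1} (\<lambda>s. h (\<gamma> s))"
    by (rule continuous_on_compose2[OF hc gcont s1])
  have s2: "(\<lambda>s. h (\<gamma> s)) ` {0..1} \<subseteq> \<Gamma>" using hin g_in by blast
  have fc: "continuous_on {0..1} f" unfolding f_def
    by (rule continuous_on_compose2[OF arc_P_cont[OF ncl] c1 s2])
  have hinj: "inj_on h \<Gamma>" using b by (simp add: bij_betw_def)
  have fi: "inj_on f {0..1}"
  proof (rule inj_onI)
    fix s s' assume ss: "s \<in> {0..1}" "s' \<in> {0..1}" "f s = f s'"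
    have "h (\<gamma> s) = h (\<gamma> s')"
      by (rule P_inj[OF hin[OF g_in[OF ss(1)]] hin[OF g_in[OF ss(2)]]]) (use ss(3) in \<open>simp add: f_def\<close>)
    then have "\<gamma> s = \<gamma> s'" using inj_onD[OF hinj _ g_in[OF ss(1)] g_in[OF ss(2)]] by blast
    then show "s = s'" using inj_onD[OF arc_inj[OF ncl] _ ss(1) ss(2)] by blast
  qed
  have fe: "P (h x) = f (P x)" if "x \<in> \<Gamma>" for x using P01[OF that] by (simp add: f_def)
  from cont_inj_mono_closed[OF fc fi] show ?thesis
  proof (elim disjE)
    assume m: "\<forall>x\<in>{0..1}. \<forall>y\<in>{0..1}. x < y \<longrightarrow> f x < f y"
    have "qinc h" unfolding qinc_def
    proof (intro ballI impI)
      fix x y assume "x \<in> \<Gamma>" "y \<in> \<Gamma>" "P x < P y"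
      then show "P (h x) < P (h y)" using m P01[of x] P01[of y] fe[of x] fe[of y] by simp
    qed
    then show ?thesis ..
  next
    assume m: "\<forall>x\<in>{0..1}. \<forall>y\<in>{0..1}. x < y \<longrightarrow> f y < f x"
    have "qdec h" unfolding qdec_def
    proof (intro ballI impI)
      fix x y assume "x \<in> \<Gamma>" "y \<in> \<Gamma>" "P x < P y"
      then show "P (h y) < P (h x)" using m P01[of x] P01[of y] fe[of x] fe[of y] by simp
    qed
    then show ?thesis ..
  qed
qed

lemma qinc_pres: "qinc h \<Longrightarrow> (\<And>x. x \<in> \<Gamma> \<Longrightarrow> h x \<in> \<Gamma>) \<Longrightarrow> pres h"
  unfolding pres_def
proof (intro ballI impI)
  fix x y z assume q: "qinc h" and xyz: "x \<in> \<Gamma>" "y \<in> \<Gamma>" "z \<in> \<Gamma>" and c: "cyc_pos (P x) (P y) (P z)"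
  define \<phi> where "\<phi> v = P (h (\<gamma> v))" for v
  have e: "P (h w) = \<phi> (P w)" if "w \<in> \<Gamma>" for w using P01[OF that] by (simp add: \<phi>_def)
  have "cyc_pos (\<phi> (P x)) (\<phi> (P y)) (\<phi> (P z))"
  proof (rule cyc_inc[OF _ c])
    fix u v assume u: "u \<in> {P x, P y, P z}" and v: "v \<in> {P x, P y, P z}" and uv: "u < v"
    obtain a where a: "a \<in> \<Gamma>" "u = P a" using u xyz by blast
    obtain b where b: "b \<in> \<Gamma>" "v = P b" using v xyz by blast
    have "P (h a) < P (h b)" using q a b uv unfolding qinc_def by blast
    then show "\<phi> u < \<phi> v" using e[OF a(1)] e[OF b(1)] a b by simp
  qed
  then show "cyc_pos (P (h x)) (P (h y)) (P (h z))" using e xyz by simp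
qed

lemma qdec_revs: "qdec h \<Longrightarrow> (\<And>x. x \<in> \<Gamma> \<Longrightarrow> h x \<in> \<Gamma>) \<Longrightarrow> revs h"
  unfolding revs_def
proof (intro ballI impI)
  fix x y z assume q: "qdec h" and xyz: "x \<in> \<Gamma>" "y \<in> \<Gamma>" "z \<in> \<Gamma>" and c: "cyc_pos (P x) (P y) (P z)"
  define \<phi> where "\<phi> v = P (h (\<gamma> v))" for v
  have e: "P (h w) = \<phi> (P w)" if "w \<in> \<Gamma>" for w using P01[OF that] by (simp add: \<phi>_def)
  have "cyc_pos (\<phi> (P z)) (\<phi> (P y)) (\<phi> (P x))"
  proof (rule cyc_dec[OF _ c])
    fix u v assume u: "u \<in> {P x, P y, P z}" and v: "v \<in> {P x, P y, P z}" and uv: "u < v"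
    obtain a where a: "a \<in> \<Gamma>" "u = P a" using u xyz by blast
    obtain b where b: "b \<in> \<Gamma>" "v = P b" using v xyz by blast
    have "P (h b) < P (h a)" using q a b uv unfolding qdec_def by blast
    then show "\<phi> v < \<phi> u" using e[OF a(1)] e[OF b(1)] a b by simp
  qed
  then show "cyc_pos (P (h z)) (P (h y)) (P (h x))" using e xyz by simp
qed

lemma arc_pres_not_qdec:
  assumes ncl: "\<not> cl" and p: "pres h" and q: "qdec h"
  shows False
proof -
  have g: "\<gamma> 0 \<in> \<Gamma>" "\<gamma> (1/2) \<in> \<Gamma>" "\<gamma> 1 \<in> \<Gamma>" by (auto intro: g_in)
  have "cyc_pos (P (\<gamma> 0)) (P (\<gamma> (1/2))) (P (\<gamma> 1))"
    using arc_Pg[OF ncl] by (simp add: cyc_pos_def)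
  then have c: "cyc_pos (P (h (\<gamma> 0))) (P (h (\<gamma> (1/2)))) (P (h (\<gamma> 1)))"
    using p g unfolding pres_def by blast
  have "P (h (\<gamma> (1/2))) < P (h (\<gamma> 0))" "P (h (\<gamma> 1)) < P (h (\<gamma> (1/2)))"
    using q g arc_Pg[OF ncl] unfolding qdec_def by auto
  then show False using c unfolding cyc_pos_def by auto
qed

lemma qinc_comp: "qinc h \<Longrightarrow> qinc k \<Longrightarrow> (\<And>x. x \<in> \<Gamma> \<Longrightarrow> k x \<in> \<Gamma>) \<Longrightarrow> qinc (\<lambda>x. h (k x))"
  unfolding qinc_def by simp
lemma qdec_comp: "qdec h \<Longrightarrow> qdec k \<Longrightarrow> (\<And>x. x \<in> \<Gamma> \<Longrightarrow> k x \<in> \<Gamma>) \<Longrightarrow> qinc (\<lambda>x. h (k x))"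
  unfolding qinc_def qdec_def by simp

lemma qinc_funpow: assumes "qinc h" "\<And>x. x \<in> \<Gamma> \<Longrightarrow> h x \<in> \<Gamma>" shows "qinc (h ^^ n)"
proof (induction n)
  case 0 then show ?case by (simp add: qinc_def)
next
  case (Suc n)
  have "qinc (\<lambda>x. h ((h ^^ n) x))"
    by (rule qinc_comp[OF assms(1) Suc.IH]) (rule funpow_in[of \<Gamma> h, OF assms(2)])
  then show ?case by (simp add: o_def)
qed

lemma qinc_inv:
  assumes b: "bij_betw h \<Gamma> \<Gamma>" and q: "qinc h"
  shows "qinc (inv_into \<Gamma> h)"
  unfolding qinc_def
proof (intro ballI impI)
  fix x y assume xy: "x \<in> \<Gamma>" "y \<in> \<Gamma>" "P x < P y"
  let ?i = "inv_into \<Gamma> h"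
  have ii: "?i w \<in> \<Gamma>" "h (?i w) = w" if "w \<in> \<Gamma>" for w
    by (rule bij_betw_apply[OF bij_betw_inv_into[OF b] that], rule bij_betw_inv_into_right[OF b that])
  show "P (?i x) < P (?i y)"
  proof (rule ccontr)
    assume "\<not> ?thesis"
    then have "P (?i y) < P (?i x) \<or> P (?i y) = P (?i x)" by auto
    then show False
    proof
      assume "P (?i y) < P (?i x)"
      then have "P (h (?i y)) < P (h (?i x))" using q ii(1) xy unfolding qinc_def by blast
      then show False using xy ii(2) by simp
    next
      assume "P (?i y) = P (?i x)"
      then have "?i y = ?i x" using P_inj ii(1) xy by blast
      then have "h (?i y) = h (?i x)" by simp
      then show False using xy ii(2) by simp
    qed
  qed
qed

lemma qdec_inv:
  assumes b: "bij_betw h \<Gamma> \<Gamma>" and q: "qdec h"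
  shows "qdec (inv_into \<Gamma> h)"
  unfolding qdec_def
proof (intro ballI impI)
  fix x y assume xy: "x \<in> \<Gamma>" "y \<in> \<Gamma>" "P x < P y"
  let ?i = "inv_into \<Gamma> h"
  have ii: "?i w \<in> \<Gamma>" "h (?i w) = w" if "w \<in> \<Gamma>" for w
    by (rule bij_betw_apply[OF bij_betw_inv_into[OF b] that], rule bij_betw_inv_into_right[OF b that])
  show "P (?i y) < P (?i x)"
  proof (rule ccontr)
    assume "\<not> ?thesis"
    then have "P (?i x) < P (?i y) \<or> P (?i y) = P (?i x)" by auto
    then show False
    proof
      assume "P (?i x) < P (?i y)"
      then have "P (h (?i y)) < P (h (?i x))" using q ii(1) xy unfolding qdec_def by blast
      then show False using xy ii(2) by simp
    next
      assume "P (?i y) = P (?i x)"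
      then have "?i y = ?i x" using P_inj ii(1) xy by blast
      then have "h (?i y) = h (?i x)" by simp
      then show False using xy ii(2) by simp
    qed
  qed
qed

lemma qinc_le: "qinc h \<Longrightarrow> x \<in> \<Gamma> \<Longrightarrow> y \<in> \<Gamma> \<Longrightarrow> P x \<le> P y \<Longrightarrow> P (h x) \<le> P (h y)"
proof -
  assume h: "qinc h" "x \<in> \<Gamma>" "y \<in> \<Gamma>" "P x \<le> P y"
  show ?thesis
  proof (cases "P x = P y")
    case True then have "x = y" using P_inj h by blast
    then show ?thesis by simp
  next
    case False then show ?thesis using h unfolding qinc_def by force
  qed
qed

definition "Qc c x = rot c (P x)"

lemma sh_cont: "cl \<Longrightarrow> c \<in> {0..1} \<Longrightarrow> continuous_on {0..1} (shiftpath c \<gamma>)"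
  using path_shiftpath[of \<gamma> c] sp by (simp add: simple_path_def path_def)

lemma sh_img: "cl \<Longrightarrow> c \<in> {0..1} \<Longrightarrow> shiftpath c \<gamma> ` {0..1} \<subseteq> \<Gamma>"
  using path_image_shiftpath[of c \<gamma>] by (simp add: path_image_def)

lemma sh_Q:
  assumes "cl" "c \<in> {0..<1}" "x \<in> \<Gamma>"
  shows "Qc c x \<in> {0..<1} \<and> shiftpath c \<gamma> (Qc c x) = x"
proof -
  have p: "P x \<in> {0..<1}" "\<gamma> (P x) = x" using cl_P[OF assms(1,3)] by auto
  have g10: "\<gamma> 1 = \<gamma> 0" using assms(1) by (simp add: pathfinish_def pathstart_def)
  show ?thesis using p assms(2) g10 unfolding Qc_def rot_def shiftpath_def by auto
qed

lemma sh_un: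
  assumes cl: "cl" and c: "c \<in> {0..<1}" and x0: "x0 \<in> \<Gamma>" and v: "v \<in> {0..1}"
    and e: "shiftpath c \<gamma> v = x0" and alt: "v < 1 \<or> x0 \<noteq> \<gamma> c"
  shows "v = Qc c x0"
proof -
  have p: "P x0 \<in> {0..<1}" "\<gamma> (P x0) = x0" using cl_P[OF cl x0] by auto
  have g10: "\<gamma> 1 = \<gamma> 0" using cl by (simp add: pathfinish_def pathstart_def)
  show ?thesis
  proof (cases "c + v \<le> 1")
    case True
    then have "\<gamma> (c + v) = \<gamma> (P x0)" using e p by (simp add: shiftpath_def)
    then have "c + v = P x0 \<or> c + v = 0 \<and> P x0 = 1 \<or> c + v = 1 \<and> P x0 = 0"
      using lf[of "c + v" "P x0"] True c v p by auto
    then show ?thesis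
    proof (elim disjE)
      assume "c + v = P x0" then show ?thesis using c v by (simp add: Qc_def rot_def)
    next
      assume "c + v = 0 \<and> P x0 = 1" then show ?thesis using p by simp
    next
      assume h: "c + v = 1 \<and> P x0 = 0"
      show ?thesis
      proof (cases "c = 0")
        case True
        then have "v = 1" using h by simp
        then have "x0 = \<gamma> c" using e True g10 by (simp add: shiftpath_def)
        then show ?thesis using alt \<open>v = 1\<close> by simp
      next
        case False
        then show ?thesis using h c by (simp add: Qc_def rot_def)
      qed
    qed
  next
    case False
    then have "\<gamma> (c + v - 1) = \<gamma> (P x0)" using e p by (simp add: shiftpath_def)
    then have "c + v - 1 = P x0 \<or> c + v - 1 = 0 \<and> P x0 = 1 \<or> c + v - 1 = 1 \<and> P x0 = 0"
      using lf[of "c + v - 1" "P x0"] False c v p by auto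
    then show ?thesis
    proof (elim disjE)
      assume h: "c + v - 1 = P x0"
      show ?thesis
      proof (cases "P x0 = c")
        case True
        then have "v = 1" using h by simp
        then show ?thesis using alt p True by simp
      next
        case False
        then have "P x0 < c" using h v by auto
        then show ?thesis using h by (simp add: Qc_def rot_def)
      qed
    next
      assume "c + v - 1 = 0 \<and> P x0 = 1" then show ?thesis using p by simp
    next
      assume "c + v - 1 = 1 \<and> P x0 = 0" then show ?thesis using c v by simp
    qed
  qed
qed

lemma Qc_zero: "cl \<Longrightarrow> \<tau> \<in> \<Gamma> \<Longrightarrow> x \<in> \<Gamma> \<Longrightarrow> Qc (P \<tau>) x = 0 \<longleftrightarrow> x = \<tau>"
proof -
  assume h: "cl" "\<tau> \<in> \<Gamma>" "x \<in> \<Gamma>"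
  have "rot (P \<tau>) (P x) = 0 \<longleftrightarrow> P x = P \<tau>" using rot_zero cl_P[OF h(1,2)] cl_P[OF h(1,3)] by blast
  also have "\<dots> \<longleftrightarrow> x = \<tau>" using P_inj h by blast
  finally show ?thesis unfolding Qc_def .
qed

lemma Qc_cont:
  assumes cl: "cl" and \<tau>: "\<tau> \<in> \<Gamma>" and x0: "x0 \<in> \<Gamma>" "x0 \<noteq> \<tau>"
  shows "continuous (at x0 within \<Gamma>) (Qc (P \<tau>))"
proof -
  have c: "P \<tau> \<in> {0..<1}" "\<gamma> (P \<tau>) = \<tau>" using cl_P[OF cl \<tau>] by auto
  show ?thesis
  proof (rule chart_cont[OF sh_cont[OF cl] _ x0(1)])
    show "P \<tau> \<in> {0..1}" using c by auto
    show "\<And>x. x \<in> \<Gamma> \<Longrightarrow> Qc (P \<tau>) x \<in> {0..1} \<and> shiftpath (P \<tau>) \<gamma> (Qc (P \<tau>) x) = x"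
      using sh_Q[OF cl c(1)] by fastforce
    fix v assume "v \<in> {0..1}" "shiftpath (P \<tau>) \<gamma> v = x0"
    then show "v = Qc (P \<tau>) x0" by (rule sh_un[OF cl c(1) x0(1)]) (use x0(2) c(2) in auto)
  qed
qed

lemma Qc_sh: assumes cl: "cl" and c: "c \<in> {0..<1}" and v: "v \<in> {0..<1}"
  shows "Qc c (shiftpath c \<gamma> v) = v"
proof -
  have "v \<in> {0..1}" "c \<in> {0..1}" using v c by auto
  then have "shiftpath c \<gamma> v \<in> \<Gamma>" using sh_img[OF cl] by blast
  then show ?thesis using sh_un[OF cl c _ _ refl] v by auto
qed

lemma pres_Qinc:
  assumes cl: "cl" and \<tau>: "\<tau> \<in> \<Gamma>" and p: "pres h" and hG: "\<And>x. x \<in> \<Gamma> \<Longrightarrow> h x \<in> \<Gamma>"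
    and fx: "h \<tau> = \<tau>" and xy: "x \<in> \<Gamma>" "y \<in> \<Gamma>" "Qc (P \<tau>) x \<le> Qc (P \<tau>) y"
  shows "Qc (P \<tau>) (h x) \<le> Qc (P \<tau>) (h y)"
proof -
  let ?c = "P \<tau>"
  have c: "?c \<in> {0..<1}" using cl_P[OF cl \<tau>] by auto
  have Px: "P x \<in> {0..<1}" "P y \<in> {0..<1}" "P (h x) \<in> {0..<1}" "P (h y) \<in> {0..<1}"
    using cl_P[OF cl] xy hG by auto
  have Qr: "Qc ?c z \<in> {0..<1}" if "z \<in> \<Gamma>" for z using sh_Q[OF cl c that] by auto
  show ?thesis
  proof (cases "Qc ?c x = Qc ?c y")
    case True
    then have "shiftpath ?c \<gamma> (Qc ?c x) = shiftpath ?c \<gamma> (Qc ?c y)" by simp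
    then have "x = y" using sh_Q[OF cl c xy(1)] sh_Q[OF cl c xy(2)] by simp
    then show ?thesis by simp
  next
    case False
    then have lt: "Qc ?c x < Qc ?c y" using xy by simp
    show ?thesis
    proof (cases "x = \<tau>")
      case True
      then have "Qc ?c (h x) = 0" using fx Qc_zero[OF cl \<tau> \<tau>] by simp
      then show ?thesis using Qr[OF hG[OF xy(2)]] by simp
    next
      case False
      have y\<tau>: "y \<noteq> \<tau>" using lt Qc_zero[OF cl \<tau> xy(1)] Qr[OF xy(1)] Qc_zero[OF cl \<tau> xy(2)] by auto
      have "P x \<noteq> ?c" "P y \<noteq> ?c" using False y\<tau> P_inj xy \<tau> by blast+
      then have "cyc_pos ?c (P x) (P y)"
        using cyc_rot0[OF c Px(1,2)] lt unfolding Qc_def by blast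
      then have "cyc_pos (P (h \<tau>)) (P (h x)) (P (h y))" using p \<tau> xy unfolding pres_def by blast
      then have "cyc_pos ?c (P (h x)) (P (h y))" using fx by simp
      then show ?thesis using cyc_rot0[OF c Px(3,4)] unfolding Qc_def by simp
    qed
  qed
qed

end


context jc
begin

lemma circ_dich:
  assumes cl: "cl" and b: "bij_betw \<alpha> \<Gamma> \<Gamma>" and ac: "continuous_on \<Gamma> \<alpha>"
  shows "pres \<alpha> \<or> (revs \<alpha> \<and> (\<exists>\<tau>\<in>\<Gamma>. \<alpha> \<tau> = \<tau>))"
proof -
  have ain: "\<alpha> x \<in> \<Gamma>" if "x \<in> \<Gamma>" for x by (rule bij_betw_apply[OF b that])
  have ainj: "inj_on \<alpha> \<Gamma>" using b by (simp add: bij_betw_def)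
  define p where "p = \<gamma> 0"
  have pG: "p \<in> \<Gamma>" unfolding p_def by (rule g_in) simp
  have Pp: "P p = 0" unfolding p_def by (rule cl_Pg[OF cl]) simp
  define q where "q = \<alpha> p"
  have qG: "q \<in> \<Gamma>" unfolding q_def by (rule ain[OF pG])
  define cq where "cq = P q"
  have cq: "cq \<in> {0..<1}" "\<gamma> cq = q" using cl_P[OF cl qG] by (auto simp: cq_def)
  define G where "G u = Qc cq (\<alpha> (\<gamma> u))" for u
  have QG: "Qc cq x \<in> {0..<1}" "shiftpath cq \<gamma> (Qc cq x) = x" if "x \<in> \<Gamma>" for x
    using sh_Q[OF cl cq(1) that] by auto
  have Qz: "Qc cq x = 0 \<longleftrightarrow> x = q" if "x \<in> \<Gamma>" for x
    using Qc_zero[OF cl qG that] by (simp add: cq_def)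
  have gu: "\<gamma> u \<in> \<Gamma>" "\<gamma> u \<noteq> p" "P (\<gamma> u) = u" if "u \<in> {0<..<1}" for u
  proof -
    show g: "\<gamma> u \<in> \<Gamma>" using that by (intro g_in) auto
    show Pu: "P (\<gamma> u) = u" using that by (intro cl_Pg[OF cl]) auto
    show "\<gamma> u \<noteq> p" using Pu Pp that by auto
  qed
  have anq: "\<alpha> x \<noteq> q" if "x \<in> \<Gamma>" "x \<noteq> p" for x
    using that inj_onD[OF ainj _ that(1) pG] by (auto simp: q_def)
  have Gr: "G u \<in> {0<..<1}" if "u \<in> {0<..<1}" for u
    using QG(1)[OF ain[OF gu(1)[OF that]]] Qz[OF ain[OF gu(1)[OF that]]] anq[OF gu(1,2)[OF that]]
    by (auto simp: G_def)
  have Qcont: "continuous_on (\<Gamma> - {q}) (Qc cq)"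
  proof -
    have "continuous (at x within \<Gamma>) (Qc cq)" if "x \<in> \<Gamma> - {q}" for x
      using Qc_cont[OF cl qG, of x] that by (simp add: cq_def)
    then show ?thesis
      by (simp add: continuous_on_eq_continuous_within continuous_within_subset[of _ \<Gamma>])
  qed
  have Gc: "continuous_on {0<..<1} G"
  proof -
    have c1: "continuous_on {0<..<1} \<gamma>" by (rule continuous_on_subset[OF gcont]) auto
    have c2: "continuous_on (\<Gamma> - {p}) \<alpha>" by (rule continuous_on_subset[OF ac]) auto
    have i1: "\<gamma> ` {0<..<1} \<subseteq> \<Gamma> - {p}" using gu by blast
    have i2: "\<alpha> ` (\<Gamma> - {p}) \<subseteq> \<Gamma> - {q}" using ain anq by blast
    have "continuous_on {0<..<1} (\<lambda>u. \<alpha> (\<gamma> u))" by (rule continuous_on_compose2[OF c2 c1 i1])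
    moreover have "(\<lambda>u. \<alpha> (\<gamma> u)) ` {0<..<1} \<subseteq> \<Gamma> - {q}" using i1 i2 by blast
    ultimately show ?thesis unfolding G_def by (rule continuous_on_compose2[OF Qcont])
  qed
  have Gi: "inj_on G {0<..<1}"
  proof (rule inj_onI)
    fix u u' assume uu: "u \<in> {0<..<1}" "u' \<in> {0<..<1}" "G u = G u'"
    have "\<alpha> (\<gamma> u) = shiftpath cq \<gamma> (G u)"
      using QG(2)[OF ain[OF gu(1)[OF uu(1)]]] by (simp add: G_def)
    also have "\<dots> = shiftpath cq \<gamma> (G u')" using uu(3) by simp
    also have "\<dots> = \<alpha> (\<gamma> u')"
      using QG(2)[OF ain[OF gu(1)[OF uu(2)]]] by (simp add: G_def)
    finally have "\<gamma> u = \<gamma> u'" using inj_onD[OF ainj _ gu(1)[OF uu(1)] gu(1)[OF uu(2)]] by blast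
    then have "P (\<gamma> u) = P (\<gamma> u')" by simp
    then show "u = u'" using gu(3)[OF uu(1)] gu(3)[OF uu(2)] by simp
  qed
  define g where "g v = (if v = 0 then 0 else G v)" for v
  have ge: "Qc cq (\<alpha> x) = g (P x)" if "x \<in> \<Gamma>" for x
  proof (cases "x = p")
    case True
    then show ?thesis using Pp Qz[OF qG] by (simp add: g_def q_def)
  next
    case False
    have "P x \<noteq> 0" using False Pp P_inj[OF that pG] by auto
    then show ?thesis using cl_P[OF cl that] by (simp add: g_def G_def)
  qed
  have PaG: "P (\<alpha> x) \<in> {0..<1}" if "x \<in> \<Gamma>" for x using cl_P[OF cl ain[OF that]] by simp
  have PG: "P x \<in> {0..<1}" if "x \<in> \<Gamma>" for x using cl_P[OF cl that] by simp
  have rotP: "Qc cq (\<alpha> x) = rot cq (P (\<alpha> x))" for x by (simp add: Qc_def)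
  from cont_inj_mono_open01[OF Gc Gi] show ?thesis
  proof (elim disjE)
    assume inc: "\<forall>x\<in>{0<..<1}. \<forall>y\<in>{0<..<1}. x < y \<longrightarrow> G x < G y"
    have "pres \<alpha>" unfolding pres_def
    proof (intro ballI impI)
      fix x y z assume xyz: "x \<in> \<Gamma>" "y \<in> \<Gamma>" "z \<in> \<Gamma>" and c: "cyc_pos (P x) (P y) (P z)"
      have "cyc_pos (g (P x)) (g (P y)) (g (P z))"
      proof (rule cyc_inc0[OF _ _ _ PG[OF xyz(1)] PG[OF xyz(2)] PG[OF xyz(3)] c])
        show "g 0 = 0" by (simp add: g_def)
        show "g u \<in> {0<..<1}" if "u \<in> {0<..<1}" for u using Gr[OF that] that by (simp add: g_def)
        show "g u < g v" if "u \<in> {0<..<1}" "v \<in> {0<..<1}" "u < v" for u v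
          using inc that by (simp add: g_def)
      qed
      then have "cyc_pos (rot cq (P (\<alpha> x))) (rot cq (P (\<alpha> y))) (rot cq (P (\<alpha> z)))"
        using ge xyz rotP by simp
      then show "cyc_pos (P (\<alpha> x)) (P (\<alpha> y)) (P (\<alpha> z))"
        using cyc_rot[OF cq(1) PaG[OF xyz(1)] PaG[OF xyz(2)] PaG[OF xyz(3)]] by simp
    qed
    then show ?thesis ..
  next
    assume dec: "\<forall>x\<in>{0<..<1}. \<forall>y\<in>{0<..<1}. x < y \<longrightarrow> G y < G x"
    have rv: "revs \<alpha>" unfolding revs_def
    proof (intro ballI impI)
      fix x y z assume xyz: "x \<in> \<Gamma>" "y \<in> \<Gamma>" "z \<in> \<Gamma>" and c: "cyc_pos (P x) (P y) (P z)"
      have "cyc_pos (g (P z)) (g (P y)) (g (P x))"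
      proof (rule cyc_rev0[OF _ _ _ PG[OF xyz(1)] PG[OF xyz(2)] PG[OF xyz(3)] c])
        show "g 0 = 0" by (simp add: g_def)
        show "g u \<in> {0<..<1}" if "u \<in> {0<..<1}" for u using Gr[OF that] that by (simp add: g_def)
        show "g v < g u" if "u \<in> {0<..<1}" "v \<in> {0<..<1}" "u < v" for u v
          using dec that by (simp add: g_def)
      qed
      then have "cyc_pos (rot cq (P (\<alpha> z))) (rot cq (P (\<alpha> y))) (rot cq (P (\<alpha> x)))"
        using ge xyz rotP by simp
      then show "cyc_pos (P (\<alpha> z)) (P (\<alpha> y)) (P (\<alpha> x))"
        using cyc_rot[OF cq(1) PaG[OF xyz(3)] PaG[OF xyz(2)] PaG[OF xyz(1)]] by simp
    qed
    have fx: "\<exists>\<tau>\<in>\<Gamma>. \<alpha> \<tau> = \<tau>"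
    proof (cases "q = p")
      case True
      then show ?thesis using pG by (auto simp: q_def)
    next
      case False
      define d where "d = cq"
      have d0: "d \<noteq> 0" using False P_inj[OF qG pG] Pp by (auto simp: d_def cq_def)
      then have d: "0 < d" "d < 1" using cq by (auto simp: d_def)
      define \<psi> where "\<psi> u = u - G u - d" for u
      define a where "a = d / 2"
      have a: "a \<in> {0<..<1}" using d by (simp add: a_def)
      have \<psi>a: "\<psi> a < 0" using Gr[OF a] d by (simp add: \<psi>_def a_def)
      define y0 where "y0 = (1 - d) / 2"
      have y0: "y0 \<in> {0..<1}" "y0 \<noteq> 0" using d by (auto simp: y0_def)
      define x1 where "x1 = shiftpath cq \<gamma> y0"
      have x1G: "x1 \<in> \<Gamma>" unfolding x1_def using sh_img[OF cl] cq y0 by force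
      have Qx1: "Qc cq x1 = y0" unfolding x1_def by (rule Qc_sh[OF cl cq(1) y0(1)])
      have x1q: "x1 \<noteq> q" using Qz[OF x1G] Qx1 y0 by auto
      define w where "w = inv_into \<Gamma> \<alpha> x1"
      have wG: "w \<in> \<Gamma>" unfolding w_def by (rule bij_betw_apply[OF bij_betw_inv_into[OF b] x1G])
      have aw: "\<alpha> w = x1" unfolding w_def by (rule bij_betw_inv_into_right[OF b x1G])
      have wp: "w \<noteq> p" using aw x1q by (auto simp: q_def)
      define b0 where "b0 = P w"
      have "P w \<noteq> 0" using wp P_inj[OF wG pG] Pp by auto
      then have b0: "b0 \<in> {0<..<1}" using PG[OF wG] by (simp add: b0_def less_le)
      have Gb0: "G b0 = y0" using cl_P[OF cl wG] aw Qx1 by (simp add: G_def b0_def)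
      define bb where "bb = max b0 ((1 + d) / 2)"
      have bb: "bb \<in> {0<..<1}" using b0 d by (auto simp: bb_def)
      have Gbb: "G bb \<le> y0"
      proof (cases "bb = b0")
        case True then show ?thesis using Gb0 by simp
      next
        case False
        then have "b0 < bb" by (simp add: bb_def)
        then show ?thesis using dec b0 bb Gb0 by force
      qed
      have \<psi>b: "0 \<le> \<psi> bb"
      proof -
        have "(1 + d) / 2 \<le> bb" by (simp add: bb_def)
        then show ?thesis using Gbb by (simp add: \<psi>_def y0_def)
      qed
      have ab: "a < bb"
      proof (rule ccontr)
        assume "\<not> a < bb"
        then have "bb < a \<or> bb = a" by auto
        then show False
        proof
          assume "bb < a"
          then have "G a < G bb" using dec a bb by blast
          then have "\<psi> bb < \<psi> a" using \<open>bb < a\<close> by (simp add: \<psi>_def)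
          then show False using \<psi>a \<psi>b by simp
        next
          assume "bb = a" then show False using \<psi>a \<psi>b by simp
        qed
      qed
      have sub: "{a..bb} \<subseteq> {0<..<1}" using a bb by auto
      have \<psi>c: "continuous_on {a..bb} \<psi>" unfolding \<psi>_def
        by (intro continuous_intros continuous_on_subset[OF Gc sub])
      obtain u where u: "a \<le> u" "u \<le> bb" "\<psi> u = 0"
        using IVT'[of \<psi> a 0 bb, OF less_imp_le[OF \<psi>a] \<psi>b less_imp_le[OF ab] \<psi>c] by blast
      have u01: "u \<in> {0<..<1}" using u sub by auto
      define x where "x = \<gamma> u"
      have xG: "x \<in> \<Gamma>" using gu(1)[OF u01] by (simp add: x_def)
      have "Qc cq (\<alpha> x) = u - d" using u(3) by (simp add: \<psi>_def G_def x_def)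
      then have r: "rot cq (P (\<alpha> x)) = u - d" by (simp add: Qc_def)
      have "P (\<alpha> x) = u"
      proof (cases "cq \<le> P (\<alpha> x)")
        case True then show ?thesis using r by (simp add: rot_def d_def)
      next
        case False then have "P (\<alpha> x) = u - 1" using r by (simp add: rot_def d_def)
        then show ?thesis using PaG[OF xG] u01 by simp
      qed
      then have "\<alpha> x = \<gamma> u" using cl_P[OF cl ain[OF xG]] by metis
      then show ?thesis using xG by (auto simp: x_def)
    qed
    show ?thesis using rv fx by blast
  qed
qed

end


context jc
begin

lemma conv_arc:
  assumes ncl: "\<not> cl" and hG: "\<And>x. x \<in> \<Gamma> \<Longrightarrow> h x \<in> \<Gamma>" and hc: "continuous_on \<Gamma> h"
    and q: "qinc h" and t: "t \<in> \<Gamma>"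
  shows "\<exists>L\<in>\<Gamma>. ((\<lambda>n. (h ^^ n) t) \<longlonglongrightarrow> L) \<and> h L = L"
proof (rule chart_conv[OF gcont _ _ hc hG _ t])
  show "\<gamma> ` {0..1} \<subseteq> \<Gamma>" by (simp add: Gimg)
  show "\<And>x. x \<in> \<Gamma> \<Longrightarrow> P x \<in> {0..1} \<and> \<gamma> (P x) = x" by (rule P01)
  show "\<And>x y. x \<in> \<Gamma> \<Longrightarrow> y \<in> \<Gamma> \<Longrightarrow> P x \<le> P y \<Longrightarrow> P (h x) \<le> P (h y)"
    by (rule qinc_le[OF q])
qed

lemma conv_circ:
  assumes cl: "cl" and hG: "\<And>x. x \<in> \<Gamma> \<Longrightarrow> h x \<in> \<Gamma>" and hc: "continuous_on \<Gamma> h"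
    and p: "pres h" and \<tau>: "\<tau> \<in> \<Gamma>" "h \<tau> = \<tau>" and t: "t \<in> \<Gamma>"
  shows "\<exists>L\<in>\<Gamma>. ((\<lambda>n. (h ^^ n) t) \<longlonglongrightarrow> L) \<and> h L = L"
proof -
  have c: "P \<tau> \<in> {0..<1}" using cl_P[OF cl \<tau>(1)] by simp
  then have c1: "P \<tau> \<in> {0..1}" by simp
  show ?thesis
  proof (rule chart_conv[OF sh_cont[OF cl c1] sh_img[OF cl c1] _ hc hG _ t])
    show "\<And>x. x \<in> \<Gamma> \<Longrightarrow> Qc (P \<tau>) x \<in> {0..1} \<and> shiftpath (P \<tau>) \<gamma> (Qc (P \<tau>) x) = x"
      using sh_Q[OF cl c] by fastforce
    show "\<And>x y. x \<in> \<Gamma> \<Longrightarrow> y \<in> \<Gamma> \<Longrightarrow> Qc (P \<tau>) x \<le> Qc (P \<tau>) y \<Longrightarrow> Qc (P \<tau>) (h x) \<le> Qc (P \<tau>) (h y)"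
      by (rule pres_Qinc[OF cl \<tau>(1) p hG \<tau>(2)])
  qed
qed

end

locale main = jc \<gamma> + diffG "path_image \<gamma>" \<alpha> for \<gamma> \<alpha> +
  assumes per: "\<exists>t. periodic_point (path_image \<gamma>) \<alpha> t"
begin

abbreviation "m \<equiv> mult \<gamma> \<alpha>"

lemma m_orient:
  assumes "orient_pres \<gamma> \<alpha>"
  shows "0 < m \<and> (\<exists>\<tau>\<in>\<Gamma>. (\<alpha> ^^ m) \<tau> = \<tau>)"
proof -
  obtain t n where tn: "t \<in> \<Gamma>" "0 < n" "(\<alpha> ^^ n) t = t"
    using per by (auto simp: periodic_point_def)
  let ?Q = "\<lambda>n::nat. n > 0 \<and> (\<exists>t\<in>path_image \<gamma>. (\<alpha> ^^ n) t = t)"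
  have "?Q n" using tn by blast
  then have "?Q (LEAST n. ?Q n)" by (rule LeastI)
  then show ?thesis using assms by (simp add: mult_def)
qed

lemma m_pos: "0 < m"
  using m_orient by (cases "orient_pres \<gamma> \<alpha>") (auto simp: mult_def)

lemma hmaps: "\<And>x. x \<in> \<Gamma> \<Longrightarrow> (\<alpha> ^^ n) x \<in> \<Gamma>" "\<And>x. x \<in> \<Gamma> \<Longrightarrow> (\<iota> ^^ n) x \<in> \<Gamma>"
  by (rule funpow_in[of \<Gamma> \<alpha>, OF a_in], assumption+) (rule funpow_in[of \<Gamma> \<iota>, OF i_in], assumption+)

lemma hconts: "continuous_on \<Gamma> (\<alpha> ^^ n)" "continuous_on \<Gamma> (\<iota> ^^ n)"
  by (rule funpow_cont[OF a_cont a_in], assumption) (rule funpow_cont[OF i_cont i_in], assumption)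

lemma ai_cancel: "x \<in> \<Gamma> \<Longrightarrow> (\<alpha> ^^ n) ((\<iota> ^^ n) x) = x"
  using funpow_cancel[of \<Gamma> \<iota> \<alpha>, OF i_in ai] by simp
lemma ia_cancel: "x \<in> \<Gamma> \<Longrightarrow> (\<iota> ^^ n) ((\<alpha> ^^ n) x) = x"
  using funpow_cancel[of \<Gamma> \<alpha> \<iota>, OF a_in ia] by simp

lemma sq_eq: "h ^^ 2 = (\<lambda>x. h (h x))"
  by (simp add: numeral_2_eq_2 fun_eq_iff)

lemma dyn_struct:
  "(\<not> cl \<and> qinc (\<alpha> ^^ m) \<and> qinc (\<iota> ^^ m)) \<or>
   (cl \<and> pres (\<alpha> ^^ m) \<and> pres (\<iota> ^^ m) \<and> (\<exists>\<tau>\<in>\<Gamma>. (\<alpha> ^^ m) \<tau> = \<tau>))"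
proof (cases "cl")
  case ncl: False
  have ac: "continuous_on \<Gamma> \<alpha>" by (rule a_cont)
  show ?thesis
  proof (cases "orient_pres \<gamma> \<alpha>")
    case True
    then have p: "pres \<alpha>" by (simp add: orient_pres_eq)
    have "qinc \<alpha> \<or> qdec \<alpha>" by (rule arc_dich[OF ncl bij a_cont])
    then have qa: "qinc \<alpha>" using arc_pres_not_qdec[OF ncl p] by blast
    have qi: "qinc \<iota>" by (rule qinc_inv[OF bij qa])
    have "qinc (\<alpha> ^^ m)" by (rule qinc_funpow[OF qa a_in])
    moreover have "qinc (\<iota> ^^ m)" by (rule qinc_funpow[OF qi i_in])
    ultimately show ?thesis using ncl by blast
  next
    case False
    then have m2: "m = 2" by (simp add: mult_def)
    have np: "\<not> pres \<alpha>" using False by (simp add: orient_pres_eq)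
    have "qinc \<alpha> \<or> qdec \<alpha>" by (rule arc_dich[OF ncl bij a_cont])
    then have qa: "qdec \<alpha>" using qinc_pres[of \<alpha>, OF _ a_in] np by blast
    have qi: "qdec \<iota>" by (rule qdec_inv[OF bij qa])
    have "qinc (\<lambda>x. \<alpha> (\<alpha> x))" by (rule qdec_comp[OF qa qa a_in])
    moreover have "qinc (\<lambda>x. \<iota> (\<iota> x))" by (rule qdec_comp[OF qi qi i_in])
    ultimately show ?thesis using ncl unfolding m2 sq_eq by blast
  qed
next
  case cl: True
  show ?thesis
  proof (cases "orient_pres \<gamma> \<alpha>")
    case True
    then have p: "pres \<alpha>" by (simp add: orient_pres_eq)
    have pi: "pres \<iota>" by (rule pres_inv[OF bij p])
    have "pres (\<alpha> ^^ m)" by (rule pres_funpow[OF p a_in])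
    moreover have "pres (\<iota> ^^ m)" by (rule pres_funpow[OF pi i_in])
    ultimately show ?thesis using cl m_orient[OF True] by blast
  next
    case False
    then have m2: "m = 2" by (simp add: mult_def)
    have np: "\<not> pres \<alpha>" using False by (simp add: orient_pres_eq)
    then obtain \<tau> where r: "revs \<alpha>" and \<tau>: "\<tau> \<in> \<Gamma>" "\<alpha> \<tau> = \<tau>"
      using circ_dich[OF cl bij a_cont] by blast
    have ri: "revs \<iota>" by (rule revs_inv[OF bij r])
    have "pres (\<lambda>x. \<alpha> (\<alpha> x))" by (rule revs_comp[OF r r a_in])
    moreover have "pres (\<lambda>x. \<iota> (\<iota> x))" by (rule revs_comp[OF ri ri i_in])
    moreover have "\<alpha> (\<alpha> \<tau>) = \<tau>" using \<tau> by simp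
    ultimately show ?thesis using cl \<tau>(1) unfolding m2 sq_eq by blast
  qed
qed

lemma dyn:
  assumes t: "t \<in> \<Gamma>"
  shows "\<exists>L\<in>\<Gamma>. ((\<lambda>n. ((\<alpha> ^^ m) ^^ n) t) \<longlonglongrightarrow> L) \<and> (\<alpha> ^^ m) L = L"
    and "\<exists>L\<in>\<Gamma>. ((\<lambda>n. ((\<iota> ^^ m) ^^ n) t) \<longlonglongrightarrow> L) \<and> (\<alpha> ^^ m) L = L"
proof -
  have fixi: "(\<alpha> ^^ m) L = L" if "L \<in> \<Gamma>" "(\<iota> ^^ m) L = L" for L
    using ai_cancel[OF that(1), of m] that(2) by simp
  have ifix: "(\<iota> ^^ m) \<tau> = \<tau>" if "\<tau> \<in> \<Gamma>" "(\<alpha> ^^ m) \<tau> = \<tau>" for \<tau>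
    using ia_cancel[OF that(1), of m] that(2) by simp
  have A: "(\<exists>L\<in>\<Gamma>. ((\<lambda>n. ((\<alpha> ^^ m) ^^ n) t) \<longlonglongrightarrow> L) \<and> (\<alpha> ^^ m) L = L) \<and>
        (\<exists>L\<in>\<Gamma>. ((\<lambda>n. ((\<iota> ^^ m) ^^ n) t) \<longlonglongrightarrow> L) \<and> (\<iota> ^^ m) L = L)"
    using dyn_struct
  proof (elim disjE conjE)
    assume ncl: "\<not> cl" and q1: "qinc (\<alpha> ^^ m)" and q2: "qinc (\<iota> ^^ m)"
    show ?thesis using conv_arc[OF ncl hmaps(1) hconts(1) q1 t] conv_arc[OF ncl hmaps(2) hconts(2) q2 t]
      by blast
  next
    assume cl: "cl" and p1: "pres (\<alpha> ^^ m)" and p2: "pres (\<iota> ^^ m)" and ex: "\<exists>\<tau>\<in>\<Gamma>. (\<alpha> ^^ m) \<tau> = \<tau>"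
    then obtain \<tau> where \<tau>: "\<tau> \<in> \<Gamma>" "(\<alpha> ^^ m) \<tau> = \<tau>" by blast
    show ?thesis using conv_circ[OF cl hmaps(1) hconts(1) p1 \<tau> t]
        conv_circ[OF cl hmaps(2) hconts(2) p2 \<tau>(1) ifix[OF \<tau>] t] by blast
  qed
  then show "\<exists>L\<in>\<Gamma>. ((\<lambda>n. ((\<alpha> ^^ m) ^^ n) t) \<longlonglongrightarrow> L) \<and> (\<alpha> ^^ m) L = L" by blast
  from A show "\<exists>L\<in>\<Gamma>. ((\<lambda>n. ((\<iota> ^^ m) ^^ n) t) \<longlonglongrightarrow> L) \<and> (\<alpha> ^^ m) L = L"
    using fixi by blast
qed

end


context main
begin

lemma iter_pos: "0 \<le> n \<Longrightarrow> iter \<Gamma> \<alpha> (int m * n) = (\<alpha> ^^ m) ^^ nat n"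
proof -
  assume n: "0 \<le> n"
  have "nat (int m * n) = m * nat n" using n by (simp add: nat_mult_distrib)
  then show ?thesis using n by (simp add: iter_def funpow_mult)
qed

lemma iter_neg: "n \<le> 0 \<Longrightarrow> iter \<Gamma> \<alpha> (int m * n) = (\<iota> ^^ m) ^^ nat (- n)"
proof -
  assume n: "n \<le> 0"
  show ?thesis
  proof (cases "n = 0")
    case True then show ?thesis by (simp add: iter_def)
  next
    case False
    have n0: "n < 0" using n False by simp
    have m0: "0 < int m" using m_pos by simp
    have lt: "int m * n < 0" by (rule mult_pos_neg[OF m0 n0])
    have e1: "- (int m * n) = int m * (- n)" by simp
    have e2: "nat (int m * (- n)) = nat (int m) * nat (- n)" by (rule nat_mult_distrib) simp
    have e3: "nat (- (int m * n)) = m * nat (- n)" unfolding e1 e2 by simp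
    have "iter \<Gamma> \<alpha> (int m * n) = \<iota> ^^ nat (- (int m * n))"
      unfolding iter_def using lt by simp
    also have "\<dots> = (\<iota> ^^ m) ^^ nat (- n)" unfolding e3 funpow_mult ..
    finally show ?thesis .
  qed
qed

lemma eta_eq: "t \<in> \<Gamma> \<Longrightarrow> eta \<gamma> \<alpha> a b aX bX i t = Eta m a b aX bX i t"
  by (simp add: eta_def fm_def Eta_def iter_nat curve_deriv_funpow)

lemma eta_lim_common:
  assumes ca: "continuous_on \<Gamma> a" and cb: "continuous_on \<Gamma> b" and t: "t \<in> \<Gamma>"
    and L: "L \<in> \<Gamma>" "(\<alpha> ^^ m) L = L"
    and X: "(X \<longlongrightarrow> L) F" and XG: "eventually (\<lambda>n. X n \<in> \<Gamma>) F"
    and ev: "eventually (\<lambda>n. iter \<Gamma> \<alpha> (int m * n) t = X n) F"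
  shows "((\<lambda>n. eta \<gamma> \<alpha> a b aX bX i (iter \<Gamma> \<alpha> (int m * n) t)) \<longlongrightarrow> Eta m a b aX bX i L) F"
    and "((\<lambda>n. eta \<gamma> \<alpha> a b aX bX i (iter \<Gamma> \<alpha> (int m * n) (iter \<Gamma> \<alpha> k t))) \<longlongrightarrow> Eta m a b aX bX i L) F"
proof -
  let ?E = "Eta m a b aX bX i"
  have Ec: "continuous_on \<Gamma> ?E" by (rule Eta_cont[OF ca cb])
  have T1: "((\<lambda>n. ?E (X n)) \<longlongrightarrow> ?E L) F"
    by (rule continuous_on_tendsto_compose[OF Ec X L(1) XG])
  have e1: "eventually (\<lambda>n. ?E (X n) = eta \<gamma> \<alpha> a b aX bX i (iter \<Gamma> \<alpha> (int m * n) t)) F"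
    using ev XG by eventually_elim (simp add: eta_eq)
  show "((\<lambda>n. eta \<gamma> \<alpha> a b aX bX i (iter \<Gamma> \<alpha> (int m * n) t)) \<longlongrightarrow> ?E L) F"
    by (rule Lim_transform_eventually[OF T1 e1])
  have T2: "((\<lambda>n. iter \<Gamma> \<alpha> k (X n)) \<longlongrightarrow> iter \<Gamma> \<alpha> k L) F"
    by (rule continuous_on_tendsto_compose[OF iter_cont X L(1) XG])
  have XG2: "eventually (\<lambda>n. iter \<Gamma> \<alpha> k (X n) \<in> \<Gamma>) F"
    using XG by eventually_elim (rule iter_in)
  have T3: "((\<lambda>n. ?E (iter \<Gamma> \<alpha> k (X n))) \<longlongrightarrow> ?E (iter \<Gamma> \<alpha> k L)) F"
    by (rule continuous_on_tendsto_compose[OF Ec T2 iter_in[OF L(1)] XG2])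
  have EL: "?E (iter \<Gamma> \<alpha> k L) = ?E L" by (rule Eta_iter[OF L])
  have e2: "eventually (\<lambda>n. ?E (iter \<Gamma> \<alpha> k (X n)) =
      eta \<gamma> \<alpha> a b aX bX i (iter \<Gamma> \<alpha> (int m * n) (iter \<Gamma> \<alpha> k t))) F"
    using ev XG
  proof eventually_elim
    case (elim n)
    have "iter \<Gamma> \<alpha> (int m * n) (iter \<Gamma> \<alpha> k t) = iter \<Gamma> \<alpha> k (iter \<Gamma> \<alpha> (int m * n) t)"
      by (rule iter_comm[OF t])
    then show ?case using elim iter_in[OF elim(2), of k] by (simp add: eta_eq)
  qed
  show "((\<lambda>n. eta \<gamma> \<alpha> a b aX bX i (iter \<Gamma> \<alpha> (int m * n) (iter \<Gamma> \<alpha> k t))) \<longlongrightarrow> ?E L) F"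
    using Lim_transform_eventually[OF T3 e2] EL by simp
qed

lemma eta_plus_inv:
  assumes ca: "continuous_on \<Gamma> a" and cb: "continuous_on \<Gamma> b" and t: "t \<in> \<Gamma>"
  shows "eta_plus \<gamma> \<alpha> a b aX bX i t = eta_plus \<gamma> \<alpha> a b aX bX i (iter \<Gamma> \<alpha> k t)"
proof -
  obtain L where L: "L \<in> \<Gamma>" "((\<lambda>n. ((\<alpha> ^^ m) ^^ n) t) \<longlonglongrightarrow> L)" "(\<alpha> ^^ m) L = L"
    using dyn(1)[OF t] by blast
  define X where "X n = ((\<alpha> ^^ m) ^^ nat n) t" for n :: int
  have X: "(X \<longlongrightarrow> L) at_top" unfolding X_def
    by (rule filterlim_compose[OF L(2) filterlim_nat_sequentially])
  have XG: "eventually (\<lambda>n. X n \<in> \<Gamma>) at_top"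
    by (rule always_eventually) (simp add: X_def funpow_mult hmaps(1)[OF t])
  have ev: "eventually (\<lambda>n. iter \<Gamma> \<alpha> (int m * n) t = X n) at_top"
    using eventually_ge_at_top[of "0::int"] by eventually_elim (simp add: X_def iter_pos)
  note R = eta_lim_common[OF ca cb t L(1,3) X XG ev]
  have nt: "(at_top :: int filter) \<noteq> bot" by simp
  show ?thesis unfolding eta_plus_def
    using tendsto_Lim[OF nt R(1)] tendsto_Lim[OF nt R(2)] by simp
qed

lemma eta_minus_inv:
  assumes ca: "continuous_on \<Gamma> a" and cb: "continuous_on \<Gamma> b" and t: "t \<in> \<Gamma>"
  shows "eta_minus \<gamma> \<alpha> a b aX bX i t = eta_minus \<gamma> \<alpha> a b aX bX i (iter \<Gamma> \<alpha> k t)"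
proof -
  obtain L where L: "L \<in> \<Gamma>" "((\<lambda>n. ((\<iota> ^^ m) ^^ n) t) \<longlonglongrightarrow> L)" "(\<alpha> ^^ m) L = L"
    using dyn(2)[OF t] by blast
  define X where "X n = ((\<iota> ^^ m) ^^ nat (- n)) t" for n :: int
  have fl: "filterlim (\<lambda>n::int. nat (- n)) sequentially at_bot"
    unfolding filterlim_at_top
  proof
    fix Z :: nat
    show "eventually (\<lambda>x::int. Z \<le> nat (- x)) at_bot"
      using eventually_le_at_bot[of "- int Z"] by eventually_elim auto
  qed
  have X: "(X \<longlongrightarrow> L) at_bot" unfolding X_def
    by (rule filterlim_compose[OF L(2) fl])
  have XG: "eventually (\<lambda>n. X n \<in> \<Gamma>) at_bot"
    by (rule always_eventually) (simp add: X_def funpow_mult hmaps(2)[OF t])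
  have ev: "eventually (\<lambda>n. iter \<Gamma> \<alpha> (int m * n) t = X n) at_bot"
    using eventually_le_at_bot[of "0::int"] by eventually_elim (simp add: X_def iter_neg)
  note R = eta_lim_common[OF ca cb t L(1,3) X XG ev]
  have nt: "(at_bot :: int filter) \<noteq> bot" by simp
  show ?thesis unfolding eta_minus_def
    using tendsto_Lim[OF nt R(1)] tendsto_Lim[OF nt R(2)] by simp
qed

lemma iter_img: "iter \<Gamma> \<alpha> k ` \<Gamma> = \<Gamma>"
proof
  show "iter \<Gamma> \<alpha> k ` \<Gamma> \<subseteq> \<Gamma>" using iter_in by blast
  show "\<Gamma> \<subseteq> iter \<Gamma> \<alpha> k ` \<Gamma>"
  proof
    fix x assume x: "x \<in> \<Gamma>"
    then have "x = iter \<Gamma> \<alpha> k (iter \<Gamma> \<alpha> (-k) x)" by (simp add: iter_inv)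
    then show "x \<in> iter \<Gamma> \<alpha> k ` \<Gamma>" using iter_in[OF x] by blast
  qed
qed

lemma iter_inj: "x \<in> \<Gamma> \<Longrightarrow> y \<in> \<Gamma> \<Longrightarrow> iter \<Gamma> \<alpha> k x = iter \<Gamma> \<alpha> k y \<Longrightarrow> x = y"
proof -
  assume h: "x \<in> \<Gamma>" "y \<in> \<Gamma>" "iter \<Gamma> \<alpha> k x = iter \<Gamma> \<alpha> k y"
  have "x = iter \<Gamma> \<alpha> (-k) (iter \<Gamma> \<alpha> k x)" using iter_inv[OF h(1), of "-k"] by simp
  also have "\<dots> = iter \<Gamma> \<alpha> (-k) (iter \<Gamma> \<alpha> k y)" using h(3) by simp
  also have "\<dots> = y" using iter_inv[OF h(2), of "-k"] by simp
  finally show "x = y" .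
qed

lemma inv_set:
  assumes SG: "S \<subseteq> \<Gamma>" and inv: "\<And>k x. x \<in> S \<Longrightarrow> iter \<Gamma> \<alpha> k x \<in> S"
  shows "iter \<Gamma> \<alpha> k ` S = S"
proof
  show "iter \<Gamma> \<alpha> k ` S \<subseteq> S" using inv by blast
  show "S \<subseteq> iter \<Gamma> \<alpha> k ` S"
  proof
    fix x assume x: "x \<in> S"
    then have "x = iter \<Gamma> \<alpha> k (iter \<Gamma> \<alpha> (-k) x)" using SG by (simp add: iter_inv subsetD)
    then show "x \<in> iter \<Gamma> \<alpha> k ` S" using inv[OF x] by blast
  qed
qed

lemma closed_G: "closed \<Gamma>"
  using sp by (simp add: closed_path_image simple_path_def)

lemma Phi_sub: "Phi \<gamma> \<alpha> \<subseteq> \<Gamma>"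
  unfolding Phi_def by (rule closure_minimal[OF _ closed_G]) blast

lemma Phi_inv: "x \<in> Phi \<gamma> \<alpha> \<Longrightarrow> iter \<Gamma> \<alpha> k x \<in> Phi \<gamma> \<alpha>"
proof -
  assume x: "x \<in> Phi \<gamma> \<alpha>"
  define S where "S = {t \<in> \<Gamma>. iter \<Gamma> \<alpha> (int m) t \<noteq> t}"
  have SG: "S \<subseteq> \<Gamma>" by (auto simp: S_def)
  have clS: "closure S \<subseteq> \<Gamma>" by (rule closure_minimal[OF SG closed_G])
  have "iter \<Gamma> \<alpha> k ` S \<subseteq> S"
  proof
    fix y assume "y \<in> iter \<Gamma> \<alpha> k ` S"
    then obtain t where t: "t \<in> S" "y = iter \<Gamma> \<alpha> k t" by blast
    have tG: "t \<in> \<Gamma>" and ne: "iter \<Gamma> \<alpha> (int m) t \<noteq> t" using t by (auto simp: S_def)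
    have "iter \<Gamma> \<alpha> (int m) y = iter \<Gamma> \<alpha> k (iter \<Gamma> \<alpha> (int m) t)" using t(2) iter_comm[OF tG] by simp
    moreover have "iter \<Gamma> \<alpha> k (iter \<Gamma> \<alpha> (int m) t) \<noteq> iter \<Gamma> \<alpha> k t"
      using ne iter_inj[OF iter_in[OF tG] tG] by blast
    ultimately show "y \<in> S" using t(2) iter_in[OF tG] by (auto simp: S_def)
  qed
  then have "iter \<Gamma> \<alpha> k ` closure S \<subseteq> closure S"
    by (intro image_closure_subset continuous_on_subset[OF iter_cont clS] closed_closure)
       (use closure_subset in blast)
  then show ?thesis using x by (auto simp: Phi_def S_def)
qed

lemma Gamma_set_inv:
  assumes ca: "continuous_on \<Gamma> a" and cb: "continuous_on \<Gamma> b"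
  shows "iter \<Gamma> \<alpha> k ` Gamma_set \<gamma> \<alpha> a b aX bX j = Gamma_set \<gamma> \<alpha> a b aX bX j"
proof (rule inv_set)
  let ?em = "eta_minus \<gamma> \<alpha> a b aX bX" and ?ep = "eta_plus \<gamma> \<alpha> a b aX bX"
  define C where "C j (ph::bool) (e0::real) (e1::real) (p0::real) (p1::real) = (if j = (1::nat) then \<not> ph else if j = 2 then ph \<and> e1 > (0::real) \<and> p1 > 0
     else if j = 3 then ph \<and> e0 < 0 \<and> p0 < 0 else if j = 4 then ph \<and> p0 < 0 \<and> 0 < e1
     else if j = 5 then ph \<and> e0 < 0 \<and> 0 < p1 else False)" for j ph e0 e1 p0 p1
  have mem: "y \<in> Gamma_set \<gamma> \<alpha> a b aX bX j \<longleftrightarrow>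
     y \<in> \<Gamma> \<and> C j (y \<in> Phi \<gamma> \<alpha>) (?em 0 y) (?em 1 y) (?ep 0 y) (?ep 1 y)" for y
    unfolding Gamma_set_def Let_def C_def using Phi_sub by auto
  have em: "?em i (iter \<Gamma> \<alpha> k x) = ?em i x" if "x \<in> \<Gamma>" for i k x
    using eta_minus_inv[OF ca cb that] by simp
  have ep: "?ep i (iter \<Gamma> \<alpha> k x) = ?ep i x" if "x \<in> \<Gamma>" for i k x
    using eta_plus_inv[OF ca cb that] by simp
  show "Gamma_set \<gamma> \<alpha> a b aX bX j \<subseteq> \<Gamma>" using mem by blast
  fix k x assume x: "x \<in> Gamma_set \<gamma> \<alpha> a b aX bX j"
  have xG: "x \<in> \<Gamma>" using x mem by blast
  have ph: "iter \<Gamma> \<alpha> k x \<in> Phi \<gamma> \<alpha> \<longleftrightarrow> x \<in> Phi \<gamma> \<alpha>"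
  proof
    assume "iter \<Gamma> \<alpha> k x \<in> Phi \<gamma> \<alpha>"
    then have "iter \<Gamma> \<alpha> (-k) (iter \<Gamma> \<alpha> k x) \<in> Phi \<gamma> \<alpha>" by (rule Phi_inv)
    then show "x \<in> Phi \<gamma> \<alpha>" using iter_inv[OF xG, of "-k"] by simp
  next
    assume "x \<in> Phi \<gamma> \<alpha>"
    then show "iter \<Gamma> \<alpha> k x \<in> Phi \<gamma> \<alpha>" by (rule Phi_inv)
  qed
  have "C j (x \<in> Phi \<gamma> \<alpha>) (?em 0 x) (?em 1 x) (?ep 0 x) (?ep 1 x)" using x mem by blast
  then have "C j (iter \<Gamma> \<alpha> k x \<in> Phi \<gamma> \<alpha>) (?em 0 (iter \<Gamma> \<alpha> k x)) (?em 1 (iter \<Gamma> \<alpha> k x))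
      (?ep 0 (iter \<Gamma> \<alpha> k x)) (?ep 1 (iter \<Gamma> \<alpha> k x))"
    by (simp only: ph em[OF xG] ep[OF xG])
  then show "iter \<Gamma> \<alpha> k x \<in> Gamma_set \<gamma> \<alpha> a b aX bX j"
    using mem iter_in[OF xG, of k] by blast
qed

end

theorem corollary5p2:
  fixes \<gamma> :: "real \<Rightarrow> complex" and \<alpha> a b :: "complex \<Rightarrow> complex" and aX bX :: real
  assumes "smooth_jordan_curve \<gamma>"
    and "curve_diffeo (path_image \<gamma>) \<alpha>"
    and "\<exists>t. periodic_point (path_image \<gamma>) \<alpha> t"
    and "0 \<le> aX" "aX \<le> bX" "bX \<le> 1"
    and "continuous_on (path_image \<gamma>) a" "continuous_on (path_image \<gamma>) b"
  shows "(\<forall>i\<in>{0,1}. \<forall>k::int. \<forall>t\<in>path_image \<gamma>.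
            eta_minus \<gamma> \<alpha> a b aX bX i t = eta_minus \<gamma> \<alpha> a b aX bX i (iter (path_image \<gamma>) \<alpha> k t) \<and>
            eta_plus \<gamma> \<alpha> a b aX bX i t = eta_plus \<gamma> \<alpha> a b aX bX i (iter (path_image \<gamma>) \<alpha> k t))
       \<and> (\<forall>j\<in>{1..5}. \<forall>k::int. iter (path_image \<gamma>) \<alpha> k ` Gamma_set \<gamma> \<alpha> a b aX bX j = Gamma_set \<gamma> \<alpha> a b aX bX j)"
proof -
  have sp: "simple_path \<gamma>" using assms(1) by (simp add: smooth_jordan_curve_def)
  interpret jc \<gamma> by unfold_locales (rule sp)
  have cd: "bij_betw \<alpha> \<Gamma> \<Gamma>" "curve_diff1 \<Gamma> \<alpha>" "curve_diff1 \<Gamma> (inv_into \<Gamma> \<alpha>)"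
    using assms(2) by (auto simp: curve_diffeo_def)
  have perf: "t islimpt \<Gamma>" if "t \<in> \<Gamma>" for t
  proof (rule connected_imp_perfect[OF _ that])
    show "connected \<Gamma>" using sp by (simp add: simple_path_def connected_path_image)
    fix x
    have "\<gamma> 0 \<noteq> \<gamma> (1/2)" using lf[of 0 "1/2"] by auto
    moreover have "\<gamma> 0 \<in> \<Gamma>" "\<gamma> (1/2) \<in> \<Gamma>" by (auto intro: g_in)
    ultimately show "\<Gamma> \<noteq> {x}" by auto
  qed
  interpret main \<gamma> \<alpha>
    by unfold_locales (use cd perf assms(3) in auto)
  show ?thesis
    using eta_minus_inv[OF assms(7,8)] eta_plus_inv[OF assms(7,8)] Gamma_set_inv[OF assms(7,8)]
    by blast
qed


end
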